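(* Fix any total budget $\mathrm{TB}\in\mathbb N_0$. Every dyadic rational game form $n/2^k$, with $n\in\mathbb Z$ and $k\in\mathbb N$, is a number.
   Context: Game forms are defined recursively: $G=\{G^{\mathcal L}\mid G^{\mathcal R}\}$ with finite sets of Left and Right options, and finite birthday. $0=\{\varnothing\mid\varnothing\}$, $1=\{0\mid\varnothing\}$. Dyadic game forms: $1/2^0=1$, for $k\in\mathbb N$, $1/2^k=\{0\mid 1/2^{k-1}\}$; for $n\in\mathbb N_0$, $n/2^k$ is the disjunctive sum of $n$ copies of $1/2^k$ (with $0/2^k=0$), and $-n/2^k=\overline{n/2^k}$, where the conjugate is $\bar G=\{\overline{G^{\mathcal R}}\mid\overline{G^{\mathcal L}}\}$. The budget set for total budget $\mathrm{TB}$ is $\mathcal B=\{0,\dots,\mathrm{TB},\hat 0,\dots,\widehat{\mathrm{TB}}\}$: state $p$ (resp. $\hat p$) means Left holds $p$ dollars and Right holds $\mathrm{TB}-p$, and Right (resp. Left) holds the tie-breaking marker. Play of $(G,\tilde p)$: at every position (terminal ones included) both players bid simultaneously, Left $\ell\in\{0,\dots,p\}$, Right $r\in\{0,\dots,\mathrm{TB}-p\}$. If Left holds the marker (state $\hat p$): if $\ell>r$ Left moves to $(G^L,\widehat{p-\ell})$, or, including the marker (allowed when $\ell\ge r$), to $(G^L,p-\ell)$; if $\ell=r$ Left wins, the marker passes to Right, play continues at $(G^L,p-\ell)$; if $\ell<r$ Right moves to $(G^R,\widehat{p+r})$. Symmetrically when Right holds the marker (state $p$): if $r>\ell$ Right moves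 to $(G^R,p+r)$ or, including the marker, to $(G^R,\widehat{p+r})$; if $r=\ell$ Right wins, the marker passes to Left, play continues at $(G^R,\widehat{p+r})$; if $r<\ell$ Left moves to $(G^L,p-\ell)$. A player who wins a bid but has no option loses. $o(G,\tilde p)\in\{\mathrm L,\mathrm R\}$ is the winner under optimal play; $\mathrm L>\mathrm R$. Disjunctive sum $G+H=\{G^{\mathcal L}+H,G+H^{\mathcal L}\mid G^{\mathcal R}+H,G+H^{\mathcal R}\}$. $G\ge H$ means $o(G+X,\tilde p)\ge o(H+X,\tilde p)$ for all game forms $X$ and all $\tilde p\in\mathcal B$; $G=H$ means $G\ge H$ and $H\ge G$; $G>H$ means $G\ge H$ and not $H\ge G$. A game is a number if it is equal (as a game) to a game form all of whose options are numbers and with $G^L<G<G^R$ for all Left options $G^L$ and Right options $G^R$; recursively, a game form $G$ is a number if all its options are numbers and $G^L<G<G^R$ for all $G^L\in G^{\mathcal L}$, $G^R\in G^{\mathcal R}$. *)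

theory Defs
  imports "HOL-Library.FSet"
begin

text \<open>A game form is given by finite sets of Left and Right options.
  Finite birthday is automatic for an inductive datatype.\<close>

datatype game = Game (lefts: "game fset") (rights: "game fset")

definition zero_g :: game where
  "zero_g = Game {||} {||}"

definition one_g :: game where
  "one_g = Game {|zero_g|} {||}"

primrec conj_g :: "game \<Rightarrow> game" where
  "conj_g (Game L R) = Game (fimage conj_g R) (fimage conj_g L)"

text \<open>Disjunctive sum.  plus_aux FL FR H computes G + H, where FL / FR are
  the functions (\<lambda>H. G^L + H) for the Left / Right options G^L / G^R of G.\<close>
primrec plus_aux :: "(game \<Rightarrow> game) fset \<Rightarrow> (game \<Rightarrow> game) fset \<Rightarrow> game \<Rightarrow> game" where
  "plus_aux FL FR (Game HL HR) =
     Game (fimage (\<lambda>f. f (Game HL HR)) FL |\<union>| fimage (plus_aux FL FR) HL)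
          (fimage (\<lambda>f. f (Game HL HR)) FR |\<union>| fimage (plus_aux FL FR) HR)"

primrec plus_g :: "game \<Rightarrow> game \<Rightarrow> game" where
  "plus_g (Game GL GR) = plus_aux (fimage plus_g GL) (fimage plus_g GR)"

primrec half_pow :: "nat \<Rightarrow> game" where
  "half_pow 0 = one_g"
| "half_pow (Suc k) = Game {|zero_g|} {|half_pow k|}"

primrec copies :: "nat \<Rightarrow> game \<Rightarrow> game" where
  "copies 0 G = zero_g"
| "copies (Suc n) G = plus_g G (copies n G)"

definition dyadic :: "int \<Rightarrow> nat \<Rightarrow> game" where
  "dyadic n k = (if 0 \<le> n then copies (nat n) (half_pow k)
                 else conj_g (copies (nat (- n)) (half_pow k)))"

text \<open>A budget state is a pair (p, m): Left holds p dollars, Right holds TB - p;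
  m = True means Left holds the tie-breaking marker (state p-hat),
  m = False means Right holds it (state p).
  One bidding round, given the outcome functions FL / FR of the Left / Right
  options (True = Left wins).  The outcome is L iff Left has a bid such that,
  whatever Right bids, Left wins under optimal continuation; the winner of the
  bid chooses the option (and, where allowed, whether to hand over the marker).
  A player who wins a bid but has no option loses.\<close>

fun bid_step :: "nat \<Rightarrow> (nat \<times> bool \<Rightarrow> bool) fset \<Rightarrow> (nat \<times> bool \<Rightarrow> bool) fset
                 \<Rightarrow> nat \<times> bool \<Rightarrow> bool" where
  "bid_step TB FL FR (p, True) =
     (\<exists>l \<le> p. \<forall>r \<le> TB - p.
        (if r < l then (\<exists>f. f |\<in>| FL \<and> (f (p - l, True) \<or> f (p - l, False)))
         else if l = r then (\<exists>f. f |\<in>| FL \<and> f (p - l, False))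
         else (\<forall>f. f |\<in>| FR \<longrightarrow> f (p + r, True))))"
| "bid_step TB FL FR (p, False) =
     (\<exists>l \<le> p. \<forall>r \<le> TB - p.
        (if l < r then (\<forall>f. f |\<in>| FR \<longrightarrow> (f (p + r, False) \<and> f (p + r, True)))
         else if r = l then (\<forall>f. f |\<in>| FR \<longrightarrow> f (p + r, True))
         else (\<exists>f. f |\<in>| FL \<and> f (p - l, False))))"

primrec outcome :: "nat \<Rightarrow> game \<Rightarrow> nat \<times> bool \<Rightarrow> bool" where
  "outcome TB (Game L R) = bid_step TB (fimage (outcome TB) L) (fimage (outcome TB) R)"

definition game_ge :: "nat \<Rightarrow> game \<Rightarrow> game \<Rightarrow> bool" where
  "game_ge TB G H = (\<forall>X p m. p \<le> TB \<longrightarrow>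
      outcome TB (plus_g H X) (p, m) \<longrightarrow> outcome TB (plus_g G X) (p, m))"

definition game_eq :: "nat \<Rightarrow> game \<Rightarrow> game \<Rightarrow> bool" where
  "game_eq TB G H = (game_ge TB G H \<and> game_ge TB H G)"

definition game_gt :: "nat \<Rightarrow> game \<Rightarrow> game \<Rightarrow> bool" where
  "game_gt TB G H = (game_ge TB G H \<and> \<not> game_ge TB H G)"

inductive is_number :: "nat \<Rightarrow> game \<Rightarrow> bool" for TB :: nat where
  "game_eq TB G H \<Longrightarrow>
   (\<forall>X. X |\<in>| lefts H \<longrightarrow> is_number TB X) \<Longrightarrow>
   (\<forall>X. X |\<in>| rights H \<longrightarrow> is_number TB X) \<Longrightarrow>
   (\<forall>X. X |\<in>| lefts H \<longrightarrow> game_gt TB H X) \<Longrightarrow>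
   (\<forall>X. X |\<in>| rights H \<longrightarrow> game_gt TB X H) \<Longrightarrow>
   is_number TB G"

end

theory Submission
  imports Defs
begin

lemma plus_Game: "plus_g (Game GL GR) (Game HL HR) =
  Game ((\<lambda>g. plus_g g (Game HL HR)) |`| GL |\<union>| plus_g (Game GL GR) |`| HL)
       ((\<lambda>g. plus_g g (Game HL HR)) |`| GR |\<union>| plus_g (Game GL GR) |`| HR)"
proof -
  have e: "plus_aux (plus_g |`| GL) (plus_g |`| GR) = plus_g (Game GL GR)" by simp
  have "plus_g (Game GL GR) (Game HL HR) = plus_aux (plus_g |`| GL) (plus_g |`| GR) (Game HL HR)" by simp
  also have "\<dots> = Game ((\<lambda>f. f (Game HL HR)) |`| (plus_g |`| GL) |\<union>| plus_aux (plus_g |`| GL) (plus_g |`| GR) |`| HL)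
       ((\<lambda>f. f (Game HL HR)) |`| (plus_g |`| GR) |\<union>| plus_aux (plus_g |`| GL) (plus_g |`| GR) |`| HR)"
    by (rule plus_aux.simps)
  also have "\<dots> = Game ((\<lambda>g. plus_g g (Game HL HR)) |`| GL |\<union>| plus_g (Game GL GR) |`| HL)
       ((\<lambda>g. plus_g g (Game HL HR)) |`| GR |\<union>| plus_g (Game GL GR) |`| HR)"
    unfolding e by (simp del: plus_g.simps add: fset.map_comp comp_def)
  finally show ?thesis .
qed

lemma lefts_plus: "lefts (plus_g G H) = (\<lambda>g. plus_g g H) |`| lefts G |\<union>| plus_g G |`| lefts H"
  by (cases G; cases H) (simp del: plus_g.simps add: plus_Game)

lemma rights_plus: "rights (plus_g G H) = (\<lambda>g. plus_g g H) |`| rights G |\<union>| plus_g G |`| rights H"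
  by (cases G; cases H) (simp del: plus_g.simps add: plus_Game)

lemma game_eqI: "lefts G = lefts H \<Longrightarrow> rights G = rights H \<Longrightarrow> G = H"
  by (cases G; cases H) auto

declare plus_g.simps[simp del]

lemma lefts_zero[simp]: "lefts zero_g = {||}" and rights_zero[simp]: "rights zero_g = {||}"
  by (simp_all add: zero_g_def)

lemma plus_zero_right: "plus_g G zero_g = G"
proof (induction G)
  case (Game GL GR)
  have "(\<lambda>g. plus_g g zero_g) |`| GL = GL" by (rule fset.map_ident_strong) (simp add: Game.IH)
  moreover have "(\<lambda>g. plus_g g zero_g) |`| GR = GR" by (rule fset.map_ident_strong) (simp add: Game.IH)
  ultimately show ?case
    by (intro game_eqI) (simp_all add: lefts_plus rights_plus)
qed

lemma plus_zero_left: "plus_g zero_g G = G"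
proof (induction G)
  case (Game GL GR)
  have "plus_g zero_g |`| GL = GL" by (rule fset.map_ident_strong) (simp add: Game.IH)
  moreover have "plus_g zero_g |`| GR = GR" by (rule fset.map_ident_strong) (simp add: Game.IH)
  ultimately show ?case
    by (intro game_eqI) (simp_all add: lefts_plus rights_plus)
qed

lemma plus_comm: "plus_g G H = plus_g H G"
proof (induction G arbitrary: H)
  case (Game GL GR)
  note outer = Game
  show ?case
  proof (induction H)
    case (Game HL HR)
    have a1: "(\<lambda>g. plus_g g (Game HL HR)) |`| GL = plus_g (Game HL HR) |`| GL"
      by (rule fset.map_cong0) (rule outer(1))
    have a2: "(\<lambda>g. plus_g g (Game HL HR)) |`| GR = plus_g (Game HL HR) |`| GR"
      by (rule fset.map_cong0) (rule outer(2))
    have b1: "plus_g (Game GL GR) |`| HL = (\<lambda>h. plus_g h (Game GL GR)) |`| HL"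
      by (rule fset.map_cong0) (rule Game(1))
    have b2: "plus_g (Game GL GR) |`| HR = (\<lambda>h. plus_g h (Game GL GR)) |`| HR"
      by (rule fset.map_cong0) (rule Game(2))
    show ?case
      by (rule game_eqI) (simp_all add: lefts_plus rights_plus a1 a2 b1 b2 funion_commute)
  qed
qed

lemma plus_assoc: "plus_g (plus_g G H) K = plus_g G (plus_g H K)"
proof (induction G arbitrary: H K)
  case (Game GL GR)
  note o1 = Game
  show ?case
  proof (induction H arbitrary: K)
    case (Game HL HR)
    note o2 = Game
    show ?case
    proof (induction K)
      case (Game KL KR)
      show ?case
        by (rule game_eqI) (simp_all add: lefts_plus rights_plus o1 o2 Game fimage_funion fimage_fimage funion_assoc cong: fset.map_cong_simp)
    qed
  qed
qed

lemma conj_lefts: "lefts (conj_g G) = conj_g |`| rights G"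
  by (cases G) auto
lemma conj_rights: "rights (conj_g G) = conj_g |`| lefts G"
  by (cases G) auto

lemma conj_plus: "conj_g (plus_g G H) = plus_g (conj_g G) (conj_g H)"
proof (induction G arbitrary: H)
  case (Game GL GR)
  note o1 = Game
  show ?case
  proof (induction H)
    case (Game HL HR)
    show ?case
      by (rule game_eqI) (simp_all add: lefts_plus rights_plus conj_lefts conj_rights o1 Game fimage_funion fimage_fimage cong: fset.map_cong_simp)
  qed
qed

lemma conj_zero: "conj_g zero_g = zero_g" by (simp add: zero_g_def)

lemma oc_T: "outcome TB X (p,True) \<longleftrightarrow> (\<exists>l\<le>p. \<forall>r\<le>TB-p.
   (r<l \<longrightarrow> (\<exists>Y. Y |\<in>| lefts X \<and> (outcome TB Y (p-l,True) \<or> outcome TB Y (p-l,False)))) \<and>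
   (r=l \<longrightarrow> (\<exists>Y. Y |\<in>| lefts X \<and> outcome TB Y (p-l,False))) \<and>
   (l<r \<longrightarrow> (\<forall>Y. Y |\<in>| rights X \<longrightarrow> outcome TB Y (p+r,True))))"
proof (cases X)
  case (Game L R)
  have "outcome TB X (p,True) = bid_step TB (outcome TB |`| L) (outcome TB |`| R) (p,True)"
    unfolding Game by simp
  also have "\<dots> = (\<exists>l\<le>p. \<forall>r\<le>TB-p.
   (r<l \<longrightarrow> (\<exists>Y. Y |\<in>| L \<and> (outcome TB Y (p-l,True) \<or> outcome TB Y (p-l,False)))) \<and>
   (r=l \<longrightarrow> (\<exists>Y. Y |\<in>| L \<and> outcome TB Y (p-l,False))) \<and>
   (l<r \<longrightarrow> (\<forall>Y. Y |\<in>| R \<longrightarrow> outcome TB Y (p+r,True))))"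
    unfolding bid_step.simps by (intro ex_cong1 conj_cong all_cong1 imp_cong refl) (auto simp: fimage_iff)
  finally show ?thesis unfolding Game by simp
qed
lemma oc_F: "outcome TB X (p,False) \<longleftrightarrow> (\<exists>l\<le>p. \<forall>r\<le>TB-p.
   (l<r \<longrightarrow> (\<forall>Y. Y |\<in>| rights X \<longrightarrow> outcome TB Y (p+r,False) \<and> outcome TB Y (p+r,True))) \<and>
   (r=l \<longrightarrow> (\<forall>Y. Y |\<in>| rights X \<longrightarrow> outcome TB Y (p+r,True))) \<and>
   (r<l \<longrightarrow> (\<exists>Y. Y |\<in>| lefts X \<and> outcome TB Y (p-l,False))))"
proof (cases X)
  case (Game L R)
  have "outcome TB X (p,False) = bid_step TB (outcome TB |`| L) (outcome TB |`| R) (p,False)"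
    unfolding Game by simp
  also have "\<dots> = (\<exists>l\<le>p. \<forall>r\<le>TB-p.
   (l<r \<longrightarrow> (\<forall>Y. Y |\<in>| R \<longrightarrow> outcome TB Y (p+r,False) \<and> outcome TB Y (p+r,True))) \<and>
   (r=l \<longrightarrow> (\<forall>Y. Y |\<in>| R \<longrightarrow> outcome TB Y (p+r,True))) \<and>
   (r<l \<longrightarrow> (\<exists>Y. Y |\<in>| L \<and> outcome TB Y (p-l,False))))"
    unfolding bid_step.simps by (intro ex_cong1 conj_cong all_cong1 imp_cong refl) (auto simp: fimage_iff)
  finally show ?thesis unfolding Game by simp
qed

lemma oc_mono: "outcome TB Y (q,m) \<Longrightarrow> q \<le> q' \<Longrightarrow> outcome TB Y (q',m)"
proof (induction Y arbitrary: q q' m)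
  case (Game L R)
  consider (T) "m = True" | (F) "m = False" by blast
  then show ?case
  proof cases
    case T
    from Game.prems obtain l where l: "l \<le> q" and H: "\<forall>r\<le>TB-q.
   (r<l \<longrightarrow> (\<exists>Y. Y |\<in>| L \<and> (outcome TB Y (q-l,True) \<or> outcome TB Y (q-l,False)))) \<and>
   (r=l \<longrightarrow> (\<exists>Y. Y |\<in>| L \<and> outcome TB Y (q-l,False))) \<and>
   (l<r \<longrightarrow> (\<forall>Y. Y |\<in>| R \<longrightarrow> outcome TB Y (q+r,True)))"
      using Game.prems(1)[unfolded \<open>m = True\<close> oc_T[of TB "Game L R"] game.sel] by blast
    have "\<forall>r\<le>TB-q'.
   (r<l \<longrightarrow> (\<exists>Y. Y |\<in>| L \<and> (outcome TB Y (q'-l,True) \<or> outcome TB Y (q'-l,False)))) \<and>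
   (r=l \<longrightarrow> (\<exists>Y. Y |\<in>| L \<and> outcome TB Y (q'-l,False))) \<and>
   (l<r \<longrightarrow> (\<forall>Y. Y |\<in>| R \<longrightarrow> outcome TB Y (q'+r,True)))"
    proof (intro allI impI conjI)
      fix r assume r: "r \<le> TB - q'"
      then have r': "r \<le> TB - q" using Game.prems(2) by linarith
      have mm: "q - l \<le> q' - l" "q + r \<le> q' + r" using Game.prems(2) by auto
      { assume "r < l"
        then obtain Y where "Y |\<in>| L" "outcome TB Y (q-l,True) \<or> outcome TB Y (q-l,False)" using H r' by blast
        then show "\<exists>Y. Y |\<in>| L \<and> (outcome TB Y (q'-l,True) \<or> outcome TB Y (q'-l,False))"
          using Game.IH(1) mm by blast }
      { assume "r = l"
        then obtain Y where "Y |\<in>| L" "outcome TB Y (q-l,False)" using H r' by blast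
        then show "\<exists>Y. Y |\<in>| L \<and> outcome TB Y (q'-l,False)"
          using Game.IH(1) mm by blast }
      { fix Y assume "l < r" "Y |\<in>| R"
        then have "outcome TB Y (q+r,True)" using H r' by blast
        then show "outcome TB Y (q'+r,True)" using Game.IH(2) mm \<open>Y |\<in>| R\<close> by blast }
    qed
    then show ?thesis unfolding \<open>m = True\<close> oc_T[of TB "Game L R" q'] game.sel using l Game.prems(2) by (intro exI[of _ l] conjI) simp_all
  next
    case F
    from Game.prems obtain l where l: "l \<le> q" and H: "\<forall>r\<le>TB-q.
   (l<r \<longrightarrow> (\<forall>Y. Y |\<in>| R \<longrightarrow> outcome TB Y (q+r,False) \<and> outcome TB Y (q+r,True))) \<and>
   (r=l \<longrightarrow> (\<forall>Y. Y |\<in>| R \<longrightarrow> outcome TB Y (q+r,True))) \<and>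
   (r<l \<longrightarrow> (\<exists>Y. Y |\<in>| L \<and> outcome TB Y (q-l,False)))"
      using Game.prems(1)[unfolded \<open>m = False\<close> oc_F[of TB "Game L R"] game.sel] by blast
    have "\<forall>r\<le>TB-q'.
   (l<r \<longrightarrow> (\<forall>Y. Y |\<in>| R \<longrightarrow> outcome TB Y (q'+r,False) \<and> outcome TB Y (q'+r,True))) \<and>
   (r=l \<longrightarrow> (\<forall>Y. Y |\<in>| R \<longrightarrow> outcome TB Y (q'+r,True))) \<and>
   (r<l \<longrightarrow> (\<exists>Y. Y |\<in>| L \<and> outcome TB Y (q'-l,False)))"
    proof (intro allI impI conjI)
      fix r assume r: "r \<le> TB - q'"
      then have r': "r \<le> TB - q" using Game.prems(2) by linarith
      have mm: "q - l \<le> q' - l" "q + r \<le> q' + r" using Game.prems(2) by auto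
      { fix Y assume "l < r" "Y |\<in>| R"
        then have "outcome TB Y (q+r,False)" "outcome TB Y (q+r,True)" using H r' by blast+
        then show "outcome TB Y (q'+r,False)" "outcome TB Y (q'+r,True)"
          using Game.IH(2) mm \<open>Y |\<in>| R\<close> by blast+ }
      { fix Y assume "r = l" "Y |\<in>| R"
        then have "outcome TB Y (q+r,True)" using H r' by blast
        then show "outcome TB Y (q'+r,True)" using Game.IH(2) mm \<open>Y |\<in>| R\<close> by blast }
      { assume "r < l"
        then obtain Y where "Y |\<in>| L" "outcome TB Y (q-l,False)" using H r' by blast
        then show "\<exists>Y. Y |\<in>| L \<and> outcome TB Y (q'-l,False)"
          using Game.IH(1) mm by blast }
    qed
    then show ?thesis unfolding \<open>m = False\<close> oc_F[of TB "Game L R" q'] game.sel using l Game.prems(2) by (intro exI[of _ l] conjI) simp_all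
  qed
qed

lemma oc_antimono: "\<not> outcome TB Y (q,m) \<Longrightarrow> q' \<le> q \<Longrightarrow> \<not> outcome TB Y (q',m)"
  using oc_mono by blast

lemma oc_TI:
  assumes "l \<le> p"
  and "\<And>r. r \<le> TB-p \<Longrightarrow> r<l \<Longrightarrow> \<exists>Y. Y |\<in>| lefts X \<and> (outcome TB Y (p-l,True) \<or> outcome TB Y (p-l,False))"
  and "\<And>r. r \<le> TB-p \<Longrightarrow> r=l \<Longrightarrow> \<exists>Y. Y |\<in>| lefts X \<and> outcome TB Y (p-l,False)"
  and "\<And>r Y. r \<le> TB-p \<Longrightarrow> l<r \<Longrightarrow> Y |\<in>| rights X \<Longrightarrow> outcome TB Y (p+r,True)"
  shows "outcome TB X (p,True)"
  unfolding oc_T[of TB X p] using assms by blast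

lemma oc_TE:
  assumes "outcome TB X (p,True)"
  obtains l where "l \<le> p"
  and "\<And>r. r \<le> TB-p \<Longrightarrow> r<l \<Longrightarrow> \<exists>Y. Y |\<in>| lefts X \<and> (outcome TB Y (p-l,True) \<or> outcome TB Y (p-l,False))"
  and "\<And>r. r \<le> TB-p \<Longrightarrow> r=l \<Longrightarrow> \<exists>Y. Y |\<in>| lefts X \<and> outcome TB Y (p-l,False)"
  and "\<And>r Y. r \<le> TB-p \<Longrightarrow> l<r \<Longrightarrow> Y |\<in>| rights X \<Longrightarrow> outcome TB Y (p+r,True)"
  using assms unfolding oc_T[of TB X p] by blast

lemma oc_FI:
  assumes "l \<le> p"
  and "\<And>r Y. r \<le> TB-p \<Longrightarrow> l<r \<Longrightarrow> Y |\<in>| rights X \<Longrightarrow> outcome TB Y (p+r,False) \<and> outcome TB Y (p+r,True)"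
  and "\<And>r Y. r \<le> TB-p \<Longrightarrow> r=l \<Longrightarrow> Y |\<in>| rights X \<Longrightarrow> outcome TB Y (p+r,True)"
  and "\<And>r. r \<le> TB-p \<Longrightarrow> r<l \<Longrightarrow> \<exists>Y. Y |\<in>| lefts X \<and> outcome TB Y (p-l,False)"
  shows "outcome TB X (p,False)"
  unfolding oc_F[of TB X p] using assms by blast

lemma oc_FE:
  assumes "outcome TB X (p,False)"
  obtains l where "l \<le> p"
  and "\<And>r Y. r \<le> TB-p \<Longrightarrow> l<r \<Longrightarrow> Y |\<in>| rights X \<Longrightarrow> outcome TB Y (p+r,False) \<and> outcome TB Y (p+r,True)"
  and "\<And>r Y. r \<le> TB-p \<Longrightarrow> r=l \<Longrightarrow> Y |\<in>| rights X \<Longrightarrow> outcome TB Y (p+r,True)"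
  and "\<And>r. r \<le> TB-p \<Longrightarrow> r<l \<Longrightarrow> \<exists>Y. Y |\<in>| lefts X \<and> outcome TB Y (p-l,False)"
proof -
  obtain l where l: "l \<le> p" and H: "\<forall>r\<le>TB-p.
   (l<r \<longrightarrow> (\<forall>Y. Y |\<in>| rights X \<longrightarrow> outcome TB Y (p+r,False) \<and> outcome TB Y (p+r,True))) \<and>
   (r=l \<longrightarrow> (\<forall>Y. Y |\<in>| rights X \<longrightarrow> outcome TB Y (p+r,True))) \<and>
   (r<l \<longrightarrow> (\<exists>Y. Y |\<in>| lefts X \<and> outcome TB Y (p-l,False)))"
    using assms[unfolded oc_F[of TB X p]] by blast
  show thesis
    apply (rule that[OF l])
    subgoal using H by blast
    subgoal using H by blast
    subgoal using H by blast
    done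
qed

lemma noc_TI:
  assumes "\<And>l. l \<le> p \<Longrightarrow> \<exists>r\<le>TB-p.
     (r<l \<and> (\<forall>Y. Y |\<in>| lefts X \<longrightarrow> \<not> outcome TB Y (p-l,True) \<and> \<not> outcome TB Y (p-l,False))) \<or>
     (r=l \<and> (\<forall>Y. Y |\<in>| lefts X \<longrightarrow> \<not> outcome TB Y (p-l,False))) \<or>
     (l<r \<and> (\<exists>Y. Y |\<in>| rights X \<and> \<not> outcome TB Y (p+r,True)))"
  shows "\<not> outcome TB X (p,True)"
proof
  assume "outcome TB X (p,True)"
  then obtain l where l: "l \<le> p"
  and h1: "\<And>r. r \<le> TB-p \<Longrightarrow> r<l \<Longrightarrow> \<exists>Y. Y |\<in>| lefts X \<and> (outcome TB Y (p-l,True) \<or> outcome TB Y (p-l,False))"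
  and h2: "\<And>r. r \<le> TB-p \<Longrightarrow> r=l \<Longrightarrow> \<exists>Y. Y |\<in>| lefts X \<and> outcome TB Y (p-l,False)"
  and h3: "\<And>r Y. r \<le> TB-p \<Longrightarrow> l<r \<Longrightarrow> Y |\<in>| rights X \<Longrightarrow> outcome TB Y (p+r,True)"
    by (elim oc_TE) blast
  from assms[OF l] obtain r where "r \<le> TB - p" and
     "(r<l \<and> (\<forall>Y. Y |\<in>| lefts X \<longrightarrow> \<not> outcome TB Y (p-l,True) \<and> \<not> outcome TB Y (p-l,False))) \<or>
     (r=l \<and> (\<forall>Y. Y |\<in>| lefts X \<longrightarrow> \<not> outcome TB Y (p-l,False))) \<or>
     (l<r \<and> (\<exists>Y. Y |\<in>| rights X \<and> \<not> outcome TB Y (p+r,True)))" by blast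
  then show False
  proof (elim disjE conjE)
    assume "r < l" "\<forall>Y. Y |\<in>| lefts X \<longrightarrow> \<not> outcome TB Y (p-l,True) \<and> \<not> outcome TB Y (p-l,False)"
    then show False using h1[OF \<open>r \<le> TB - p\<close>] by blast
  next
    assume "r = l" "\<forall>Y. Y |\<in>| lefts X \<longrightarrow> \<not> outcome TB Y (p-l,False)"
    then show False using h2[OF \<open>r \<le> TB - p\<close>] by blast
  next
    assume "l < r" "\<exists>Y. Y |\<in>| rights X \<and> \<not> outcome TB Y (p+r,True)"
    then show False using h3[OF \<open>r \<le> TB - p\<close>] by blast
  qed
qed

lemma noc_FI:
  assumes "\<And>l. l \<le> p \<Longrightarrow> \<exists>r\<le>TB-p.
     (l<r \<and> (\<exists>Y. Y |\<in>| rights X \<and> (\<not> outcome TB Y (p+r,False) \<or> \<not> outcome TB Y (p+r,True)))) \<or>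
     (r=l \<and> (\<exists>Y. Y |\<in>| rights X \<and> \<not> outcome TB Y (p+r,True))) \<or>
     (r<l \<and> (\<forall>Y. Y |\<in>| lefts X \<longrightarrow> \<not> outcome TB Y (p-l,False)))"
  shows "\<not> outcome TB X (p,False)"
proof
  assume "outcome TB X (p,False)"
  then obtain l where l: "l \<le> p"
  and h1: "\<And>r Y. r \<le> TB-p \<Longrightarrow> l<r \<Longrightarrow> Y |\<in>| rights X \<Longrightarrow> outcome TB Y (p+r,False) \<and> outcome TB Y (p+r,True)"
  and h2: "\<And>r Y. r \<le> TB-p \<Longrightarrow> r=l \<Longrightarrow> Y |\<in>| rights X \<Longrightarrow> outcome TB Y (p+r,True)"
  and h3: "\<And>r. r \<le> TB-p \<Longrightarrow> r<l \<Longrightarrow> \<exists>Y. Y |\<in>| lefts X \<and> outcome TB Y (p-l,False)"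
    by (elim oc_FE) blast
  from assms[OF l] obtain r where "r \<le> TB - p" and
     "(l<r \<and> (\<exists>Y. Y |\<in>| rights X \<and> (\<not> outcome TB Y (p+r,False) \<or> \<not> outcome TB Y (p+r,True)))) \<or>
     (r=l \<and> (\<exists>Y. Y |\<in>| rights X \<and> \<not> outcome TB Y (p+r,True))) \<or>
     (r<l \<and> (\<forall>Y. Y |\<in>| lefts X \<longrightarrow> \<not> outcome TB Y (p-l,False)))" by blast
  then show False
  proof (elim disjE conjE)
    assume "l < r" "\<exists>Y. Y |\<in>| rights X \<and> (\<not> outcome TB Y (p+r,False) \<or> \<not> outcome TB Y (p+r,True))"
    then show False using h1[OF \<open>r \<le> TB - p\<close>] by blast
  next
    assume "r = l" "\<exists>Y. Y |\<in>| rights X \<and> \<not> outcome TB Y (p+r,True)"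
    then show False using h2[OF \<open>r \<le> TB - p\<close>] by blast
  next
    assume "r < l" "\<forall>Y. Y |\<in>| lefts X \<longrightarrow> \<not> outcome TB Y (p-l,False)"
    then show False using h3[OF \<open>r \<le> TB - p\<close>] by blast
  qed
qed



lemma noc_TE:
  assumes "\<not> outcome TB X (p,True)" "l \<le> p"
  obtains r where "r \<le> TB-p" "r<l" "\<forall>Y. Y |\<in>| lefts X \<longrightarrow> \<not> outcome TB Y (p-l,True) \<and> \<not> outcome TB Y (p-l,False)"
   | r where "r \<le> TB-p" "r=l" "\<forall>Y. Y |\<in>| lefts X \<longrightarrow> \<not> outcome TB Y (p-l,False)"
   | r Y where "r \<le> TB-p" "l<r" "Y |\<in>| rights X" "\<not> outcome TB Y (p+r,True)"
proof -
  have "\<not> (\<forall>r\<le>TB-p.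
   (r<l \<longrightarrow> (\<exists>Y. Y |\<in>| lefts X \<and> (outcome TB Y (p-l,True) \<or> outcome TB Y (p-l,False)))) \<and>
   (r=l \<longrightarrow> (\<exists>Y. Y |\<in>| lefts X \<and> outcome TB Y (p-l,False))) \<and>
   (l<r \<longrightarrow> (\<forall>Y. Y |\<in>| rights X \<longrightarrow> outcome TB Y (p+r,True))))"
    using assms unfolding oc_T[of TB X p] by blast
  then obtain r where r: "r \<le> TB - p" and nn: "\<not> ((r<l \<longrightarrow> (\<exists>Y. Y |\<in>| lefts X \<and> (outcome TB Y (p-l,True) \<or> outcome TB Y (p-l,False)))) \<and>
   (r=l \<longrightarrow> (\<exists>Y. Y |\<in>| lefts X \<and> outcome TB Y (p-l,False))) \<and>
   (l<r \<longrightarrow> (\<forall>Y. Y |\<in>| rights X \<longrightarrow> outcome TB Y (p+r,True))))" by blast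
  consider "r < l" | "r = l" | "l < r" by linarith
  then show thesis
  proof cases
    case 1 then have "r \<noteq> l" "\<not> l < r" by auto
    then show ?thesis using that(1)[OF r] nn 1 by blast
  next
    case 2 then have "\<not> r < l" "\<not> l < r" by auto
    then show ?thesis using that(2)[OF r] nn 2 by blast
  next
    case 3 then have "r \<noteq> l" "\<not> r < l" by auto
    then show ?thesis using that(3)[OF r] nn 3 by blast
  qed
qed

lemma noc_FE:
  assumes "\<not> outcome TB X (p,False)" "l \<le> p"
  obtains r Y where "r \<le> TB-p" "l<r" "Y |\<in>| rights X" "\<not> outcome TB Y (p+r,False) \<or> \<not> outcome TB Y (p+r,True)"
   | r Y where "r \<le> TB-p" "r=l" "Y |\<in>| rights X" "\<not> outcome TB Y (p+r,True)"
   | r where "r \<le> TB-p" "r<l" "\<forall>Y. Y |\<in>| lefts X \<longrightarrow> \<not> outcome TB Y (p-l,False)"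
proof -
  have "\<not> (\<forall>r\<le>TB-p.
   (l<r \<longrightarrow> (\<forall>Y. Y |\<in>| rights X \<longrightarrow> outcome TB Y (p+r,False) \<and> outcome TB Y (p+r,True))) \<and>
   (r=l \<longrightarrow> (\<forall>Y. Y |\<in>| rights X \<longrightarrow> outcome TB Y (p+r,True))) \<and>
   (r<l \<longrightarrow> (\<exists>Y. Y |\<in>| lefts X \<and> outcome TB Y (p-l,False))))"
    using assms unfolding oc_F[of TB X p] by blast
  then obtain r where r: "r \<le> TB - p" and nn: "\<not> ((l<r \<longrightarrow> (\<forall>Y. Y |\<in>| rights X \<longrightarrow> outcome TB Y (p+r,False) \<and> outcome TB Y (p+r,True))) \<and>
   (r=l \<longrightarrow> (\<forall>Y. Y |\<in>| rights X \<longrightarrow> outcome TB Y (p+r,True))) \<and>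
   (r<l \<longrightarrow> (\<exists>Y. Y |\<in>| lefts X \<and> outcome TB Y (p-l,False))))" by blast
  consider "l < r" | "r = l" | "r < l" by linarith
  then show thesis
  proof cases
    case 1 then have "r \<noteq> l" "\<not> r < l" by auto
    then show ?thesis using that(1)[OF r] nn 1 by blast
  next
    case 2 then have "\<not> r < l" "\<not> l < r" by auto
    then show ?thesis using that(2)[OF r] nn 2 by blast
  next
    case 3 then have "r \<noteq> l" "\<not> l < r" by auto
    then show ?thesis using that(3)[OF r] nn 3 by blast
  qed
qed

lemma mem_lefts_plus: "X |\<in>| lefts (plus_g G H) \<longleftrightarrow> (\<exists>g. g |\<in>| lefts G \<and> X = plus_g g H) \<or> (\<exists>h. h |\<in>| lefts H \<and> X = plus_g G h)"
  by (auto simp: lefts_plus)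
lemma mem_rights_plus: "X |\<in>| rights (plus_g G H) \<longleftrightarrow> (\<exists>g. g |\<in>| rights G \<and> X = plus_g g H) \<or> (\<exists>h. h |\<in>| rights H \<and> X = plus_g G h)"
  by (auto simp: rights_plus)

definition Aprop :: "nat \<Rightarrow> game \<Rightarrow> game \<Rightarrow> bool" where
  "Aprop TB Z Y \<longleftrightarrow> (\<forall>s. outcome TB Y s \<longrightarrow> outcome TB (plus_g Z Y) s)"
definition Bprop :: "nat \<Rightarrow> game \<Rightarrow> game \<Rightarrow> bool" where
  "Bprop TB Z Y \<longleftrightarrow> (\<forall>q q'. q \<le> q' \<longrightarrow> outcome TB Y (q,False) \<longrightarrow> outcome TB (plus_g Z Y) (q',True))"

lemma AD: "Aprop TB Z Y \<Longrightarrow> outcome TB Y s \<Longrightarrow> outcome TB (plus_g Z Y) s"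
  unfolding Aprop_def by blast
lemma BD: "Bprop TB Z Y \<Longrightarrow> q \<le> q' \<Longrightarrow> outcome TB Y (q,False) \<Longrightarrow> outcome TB (plus_g Z Y) (q',True)"
  by (simp add: Bprop_def)

lemma tokAB:
  assumes z0: "zero_g |\<in>| lefts Z"
  and zr: "\<And>Z' Y. Z' |\<in>| rights Z \<Longrightarrow> Aprop TB Z' Y \<and> Bprop TB Z' Y"
  shows "Aprop TB Z Y \<and> Bprop TB Z Y"
proof (induction Y)
  case (Game L R)
  define Y where "Y = Game L R"
  have IHA: "\<And>Y' s. Y' |\<in>| lefts Y \<or> Y' |\<in>| rights Y \<Longrightarrow> outcome TB Y' s \<Longrightarrow> outcome TB (plus_g Z Y') s"
    using Game.IH unfolding Y_def by (auto intro: AD)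
  have ZA: "\<And>Z' s. Z' |\<in>| rights Z \<Longrightarrow> outcome TB Y s \<Longrightarrow> outcome TB (plus_g Z' Y) s"
    using zr by (auto intro: AD)
  have ZB: "\<And>Z' q q'. Z' |\<in>| rights Z \<Longrightarrow> q \<le> q' \<Longrightarrow> outcome TB Y (q,False) \<Longrightarrow> outcome TB (plus_g Z' Y) (q',True)"
    using zr by (auto intro: BD)
  have A: "Aprop TB Z Y" unfolding Aprop_def
  proof (intro allI impI)
    fix s assume oY: "outcome TB Y s"
    obtain q m where s: "s = (q,m)" by (cases s)
    consider (T) "m = True" | (F) "m = False" by blast
    then show "outcome TB (plus_g Z Y) s"
    proof cases
      case T
      from oY have oYq: "outcome TB Y (q,True)" using s T by simp
      then obtain l where l: "l \<le> q"
        and h1: "\<And>r. r \<le> TB-q \<Longrightarrow> r<l \<Longrightarrow> \<exists>Y'. Y' |\<in>| lefts Y \<and> (outcome TB Y' (q-l,True) \<or> outcome TB Y' (q-l,False))"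
        and h2: "\<And>r. r \<le> TB-q \<Longrightarrow> r=l \<Longrightarrow> \<exists>Y'. Y' |\<in>| lefts Y \<and> outcome TB Y' (q-l,False)"
        and h3: "\<And>r Y'. r \<le> TB-q \<Longrightarrow> l<r \<Longrightarrow> Y' |\<in>| rights Y \<Longrightarrow> outcome TB Y' (q+r,True)"
        by (elim oc_TE) blast
      show ?thesis unfolding s T
      proof (rule oc_TI[OF l])
        fix r assume r: "r \<le> TB - q" "r < l"
        from h1[OF r] obtain Y' where Y': "Y' |\<in>| lefts Y" "outcome TB Y' (q-l,True) \<or> outcome TB Y' (q-l,False)" by blast
        then have "plus_g Z Y' |\<in>| lefts (plus_g Z Y)" by (auto simp: mem_lefts_plus)
        then show "\<exists>X. X |\<in>| lefts (plus_g Z Y) \<and> (outcome TB X (q-l,True) \<or> outcome TB X (q-l,False))"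
          using Y' IHA by blast
      next
        fix r assume r: "r \<le> TB - q" "r = l"
        from h2[OF r] obtain Y' where Y': "Y' |\<in>| lefts Y" "outcome TB Y' (q-l,False)" by blast
        then have "plus_g Z Y' |\<in>| lefts (plus_g Z Y)" by (auto simp: mem_lefts_plus)
        then show "\<exists>X. X |\<in>| lefts (plus_g Z Y) \<and> outcome TB X (q-l,False)"
          using Y' IHA by blast
      next
        fix r X assume r: "r \<le> TB - q" "l < r" and X: "X |\<in>| rights (plus_g Z Y)"
        from X consider (a) Z' where "Z' |\<in>| rights Z" "X = plus_g Z' Y" | (b) Y' where "Y' |\<in>| rights Y" "X = plus_g Z Y'"
          by (auto simp: mem_rights_plus)
        then show "outcome TB X (q+r,True)"
        proof cases
          case a
          have "outcome TB Y (q+r,True)" using oc_mono[OF oYq] by simp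
          then show ?thesis using a ZA by simp
        next
          case b
          then show ?thesis using h3[OF r b(1)] IHA by simp
        qed
      qed
    next
      case F
      from oY have oYq: "outcome TB Y (q,False)" using s F by simp
      then obtain l where l: "l \<le> q"
        and h1: "\<And>r Y'. r \<le> TB-q \<Longrightarrow> l<r \<Longrightarrow> Y' |\<in>| rights Y \<Longrightarrow> outcome TB Y' (q+r,False) \<and> outcome TB Y' (q+r,True)"
        and h2: "\<And>r Y'. r \<le> TB-q \<Longrightarrow> r=l \<Longrightarrow> Y' |\<in>| rights Y \<Longrightarrow> outcome TB Y' (q+r,True)"
        and h3: "\<And>r. r \<le> TB-q \<Longrightarrow> r<l \<Longrightarrow> \<exists>Y'. Y' |\<in>| lefts Y \<and> outcome TB Y' (q-l,False)"
        by (elim oc_FE) blast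
      show ?thesis unfolding s F
      proof (rule oc_FI[OF l])
        fix r X assume r: "r \<le> TB - q" "l < r" and X: "X |\<in>| rights (plus_g Z Y)"
        from X consider (a) Z' where "Z' |\<in>| rights Z" "X = plus_g Z' Y" | (b) Y' where "Y' |\<in>| rights Y" "X = plus_g Z Y'"
          by (auto simp: mem_rights_plus)
        then show "outcome TB X (q+r,False) \<and> outcome TB X (q+r,True)"
        proof cases
          case a
          have "outcome TB Y (q+r,False)" using oc_mono[OF oYq] by simp
          then show ?thesis using a ZA ZB[OF a(1) _ oYq, of "q+r"] by simp
        next
          case b
          then show ?thesis using h1[OF r b(1)] IHA by simp
        qed
      next
        fix r X assume r: "r \<le> TB - q" "r = l" and X: "X |\<in>| rights (plus_g Z Y)"
        from X consider (a) Z' where "Z' |\<in>| rights Z" "X = plus_g Z' Y" | (b) Y' where "Y' |\<in>| rights Y" "X = plus_g Z Y'"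
          by (auto simp: mem_rights_plus)
        then show "outcome TB X (q+r,True)"
        proof cases
          case a
          then show ?thesis using ZB[OF a(1) _ oYq, of "q+r"] by simp
        next
          case b
          then show ?thesis using h2[OF r b(1)] IHA by simp
        qed
      next
        fix r assume r: "r \<le> TB - q" "r < l"
        from h3[OF r] obtain Y' where Y': "Y' |\<in>| lefts Y" "outcome TB Y' (q-l,False)" by blast
        then have "plus_g Z Y' |\<in>| lefts (plus_g Z Y)" by (auto simp: mem_lefts_plus)
        then show "\<exists>X. X |\<in>| lefts (plus_g Z Y) \<and> outcome TB X (q-l,False)"
          using Y' IHA by blast
      qed
    qed
  qed
  have B: "Bprop TB Z Y" unfolding Bprop_def
  proof (intro allI impI)
    fix q q' assume qq: "q \<le> q'" and oYq: "outcome TB Y (q,False)"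
    then obtain l where l: "l \<le> q"
        and h1: "\<And>r Y'. r \<le> TB-q \<Longrightarrow> l<r \<Longrightarrow> Y' |\<in>| rights Y \<Longrightarrow> outcome TB Y' (q+r,False) \<and> outcome TB Y' (q+r,True)"
        and h2: "\<And>r Y'. r \<le> TB-q \<Longrightarrow> r=l \<Longrightarrow> Y' |\<in>| rights Y \<Longrightarrow> outcome TB Y' (q+r,True)"
        and h3: "\<And>r. r \<le> TB-q \<Longrightarrow> r<l \<Longrightarrow> \<exists>Y'. Y' |\<in>| lefts Y \<and> outcome TB Y' (q-l,False)"
        by (elim oc_FE) blast
    have l': "l \<le> q'" using l qq by simp
    have pZ: "plus_g zero_g Y |\<in>| lefts (plus_g Z Y)" using z0 by (auto simp: mem_lefts_plus)
    have rr: "\<And>r. r \<le> TB - q' \<Longrightarrow> r \<le> TB - q" using qq by simp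
    show "outcome TB (plus_g Z Y) (q',True)"
    proof (rule oc_TI[OF l'])
      fix r assume r: "r \<le> TB - q'" "r < l"
      from h3[OF rr[OF r(1)] r(2)] obtain Y' where Y': "Y' |\<in>| lefts Y" "outcome TB Y' (q-l,False)" by blast
      then have "outcome TB Y' (q'-l,False)" using oc_mono qq by (metis diff_le_mono)
      moreover have "plus_g Z Y' |\<in>| lefts (plus_g Z Y)" using Y' by (auto simp: mem_lefts_plus)
      ultimately show "\<exists>X. X |\<in>| lefts (plus_g Z Y) \<and> (outcome TB X (q'-l,True) \<or> outcome TB X (q'-l,False))"
        using Y' IHA by blast
    next
      fix r assume r: "r \<le> TB - q'" "r = l"
      show "\<exists>X. X |\<in>| lefts (plus_g Z Y) \<and> outcome TB X (q'-l,False)"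
      proof (cases "l = 0")
        case True
        have "outcome TB Y (q',False)" using oc_mono[OF oYq qq] .
        then show ?thesis using pZ True by (auto simp: plus_zero_left)
      next
        case False
        from h3[OF _ , of 0] False obtain Y' where Y': "Y' |\<in>| lefts Y" "outcome TB Y' (q-l,False)" by auto
        then have "outcome TB Y' (q'-l,False)" using oc_mono qq by (metis diff_le_mono)
        moreover have "plus_g Z Y' |\<in>| lefts (plus_g Z Y)" using Y' by (auto simp: mem_lefts_plus)
        ultimately show ?thesis using Y' IHA by blast
      qed
    next
      fix r X assume r: "r \<le> TB - q'" "l < r" and X: "X |\<in>| rights (plus_g Z Y)"
      from X consider (a) Z' where "Z' |\<in>| rights Z" "X = plus_g Z' Y" | (b) Y' where "Y' |\<in>| rights Y" "X = plus_g Z Y'"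
        by (auto simp: mem_rights_plus)
      then show "outcome TB X (q'+r,True)"
      proof cases
        case a
        then show ?thesis using ZB[OF a(1) _ oYq, of "q'+r"] qq by simp
      next
        case b
        have "outcome TB Y' (q+r,True)" using h1[OF rr[OF r(1)] r(2) b(1)] by simp
        then have "outcome TB Y' (q'+r,True)" using oc_mono qq by (metis add_le_mono1)
        then show ?thesis using b IHA by simp
      qed
    qed
  qed
  show ?case using A B unfolding Y_def by blast
qed

definition Aprop' :: "nat \<Rightarrow> game \<Rightarrow> game \<Rightarrow> bool" where
  "Aprop' TB Z Y \<longleftrightarrow> (\<forall>s. \<not> outcome TB Y s \<longrightarrow> \<not> outcome TB (plus_g Z Y) s)"
definition Bprop' :: "nat \<Rightarrow> game \<Rightarrow> game \<Rightarrow> bool" where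
  "Bprop' TB Z Y \<longleftrightarrow> (\<forall>q q'. q' \<le> q \<longrightarrow> \<not> outcome TB Y (q,True) \<longrightarrow> \<not> outcome TB (plus_g Z Y) (q',False))"

lemma AD': "Aprop' TB Z Y \<Longrightarrow> \<not> outcome TB Y s \<Longrightarrow> \<not> outcome TB (plus_g Z Y) s"
  unfolding Aprop'_def by blast
lemma BD': "Bprop' TB Z Y \<Longrightarrow> q' \<le> q \<Longrightarrow> \<not> outcome TB Y (q,True) \<Longrightarrow> \<not> outcome TB (plus_g Z Y) (q',False)"
  unfolding Bprop'_def by blast

lemma tokAB':
  assumes z0: "zero_g |\<in>| rights Z"
  and zl: "\<And>Z' Y. Z' |\<in>| lefts Z \<Longrightarrow> Aprop' TB Z' Y \<and> Bprop' TB Z' Y"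
  shows "Aprop' TB Z Y \<and> Bprop' TB Z Y"
proof (induction Y)
  case (Game L R)
  define Y where "Y = Game L R"
  have IHA: "\<And>Y' s. Y' |\<in>| lefts Y \<or> Y' |\<in>| rights Y \<Longrightarrow> \<not> outcome TB Y' s \<Longrightarrow> \<not> outcome TB (plus_g Z Y') s"
    using Game.IH unfolding Y_def by (auto dest: AD')
  have ZA: "\<And>Z' s. Z' |\<in>| lefts Z \<Longrightarrow> \<not> outcome TB Y s \<Longrightarrow> \<not> outcome TB (plus_g Z' Y) s"
    using zl by (auto dest: AD')
  have ZB: "\<And>Z' q q'. Z' |\<in>| lefts Z \<Longrightarrow> q' \<le> q \<Longrightarrow> \<not> outcome TB Y (q,True) \<Longrightarrow> \<not> outcome TB (plus_g Z' Y) (q',False)"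
    using zl by (auto dest: BD')
  have A: "Aprop' TB Z Y" unfolding Aprop'_def
  proof (intro allI impI)
    fix s assume oY: "\<not> outcome TB Y s"
    obtain q m where s: "s = (q,m)" by (cases s)
    consider (T) "m = True" | (F) "m = False" by blast
    then show "\<not> outcome TB (plus_g Z Y) s"
    proof cases
      case T
      from oY have oYq: "\<not> outcome TB Y (q,True)" using s T by simp
      show ?thesis unfolding s T
      proof (rule noc_TI)
        fix l assume l: "l \<le> q"
        from oYq l show "\<exists>r\<le>TB-q.
          (r<l \<and> (\<forall>X. X |\<in>| lefts (plus_g Z Y) \<longrightarrow> \<not> outcome TB X (q-l,True) \<and> \<not> outcome TB X (q-l,False))) \<or>
          (r=l \<and> (\<forall>X. X |\<in>| lefts (plus_g Z Y) \<longrightarrow> \<not> outcome TB X (q-l,False))) \<or>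
          (l<r \<and> (\<exists>X. X |\<in>| rights (plus_g Z Y) \<and> \<not> outcome TB X (q+r,True)))"
        proof (cases rule: noc_TE)
          case (1 r)
          have "\<forall>X. X |\<in>| lefts (plus_g Z Y) \<longrightarrow> \<not> outcome TB X (q-l,True) \<and> \<not> outcome TB X (q-l,False)"
          proof (intro allI impI)
            fix X assume "X |\<in>| lefts (plus_g Z Y)"
            then consider (a) Z' where "Z' |\<in>| lefts Z" "X = plus_g Z' Y" | (b) Y' where "Y' |\<in>| lefts Y" "X = plus_g Z Y'"
              by (auto simp: mem_lefts_plus)
            then show "\<not> outcome TB X (q-l,True) \<and> \<not> outcome TB X (q-l,False)"
            proof cases
              case a
              have "\<not> outcome TB Y (q-l,True)" using oc_antimono[OF oYq] by simp
              then show ?thesis using a ZA ZB[OF a(1) _ oYq, of "q-l"] by simp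
            next
              case b
              then show ?thesis using 1(3) IHA by simp
            qed
          qed
          then show ?thesis using 1 by blast
        next
          case (2 r)
          have "\<forall>X. X |\<in>| lefts (plus_g Z Y) \<longrightarrow> \<not> outcome TB X (q-l,False)"
          proof (intro allI impI)
            fix X assume "X |\<in>| lefts (plus_g Z Y)"
            then consider (a) Z' where "Z' |\<in>| lefts Z" "X = plus_g Z' Y" | (b) Y' where "Y' |\<in>| lefts Y" "X = plus_g Z Y'"
              by (auto simp: mem_lefts_plus)
            then show "\<not> outcome TB X (q-l,False)"
            proof cases
              case a
              then show ?thesis using ZB[OF a(1) _ oYq, of "q-l"] by simp
            next
              case b
              then show ?thesis using 2(3) IHA by simp
            qed
          qed
          then show ?thesis using 2 by blast
        next
          case (3 r Y')
          have "plus_g Z Y' |\<in>| rights (plus_g Z Y)" using 3 by (auto simp: mem_rights_plus)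
          moreover have "\<not> outcome TB (plus_g Z Y') (q+r,True)" using 3 IHA by simp
          ultimately show ?thesis using 3 by blast
        qed
      qed
    next
      case F
      from oY have oYq: "\<not> outcome TB Y (q,False)" using s F by simp
      show ?thesis unfolding s F
      proof (rule noc_FI)
        fix l assume l: "l \<le> q"
        from oYq l show "\<exists>r\<le>TB-q.
          (l<r \<and> (\<exists>X. X |\<in>| rights (plus_g Z Y) \<and> (\<not> outcome TB X (q+r,False) \<or> \<not> outcome TB X (q+r,True)))) \<or>
          (r=l \<and> (\<exists>X. X |\<in>| rights (plus_g Z Y) \<and> \<not> outcome TB X (q+r,True))) \<or>
          (r<l \<and> (\<forall>X. X |\<in>| lefts (plus_g Z Y) \<longrightarrow> \<not> outcome TB X (q-l,False)))"
        proof (cases rule: noc_FE)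
          case (1 r Y')
          have "plus_g Z Y' |\<in>| rights (plus_g Z Y)" using 1 by (auto simp: mem_rights_plus)
          moreover have "\<not> outcome TB (plus_g Z Y') (q+r,False) \<or> \<not> outcome TB (plus_g Z Y') (q+r,True)"
            using 1 IHA by blast
          ultimately show ?thesis using 1 by blast
        next
          case (2 r Y')
          have "plus_g Z Y' |\<in>| rights (plus_g Z Y)" using 2 by (auto simp: mem_rights_plus)
          moreover have "\<not> outcome TB (plus_g Z Y') (q+r,True)" using 2 IHA by simp
          ultimately show ?thesis using 2 by blast
        next
          case (3 r)
          have "\<forall>X. X |\<in>| lefts (plus_g Z Y) \<longrightarrow> \<not> outcome TB X (q-l,False)"
          proof (intro allI impI)
            fix X assume "X |\<in>| lefts (plus_g Z Y)"
            then consider (a) Z' where "Z' |\<in>| lefts Z" "X = plus_g Z' Y" | (b) Y' where "Y' |\<in>| lefts Y" "X = plus_g Z Y'"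
              by (auto simp: mem_lefts_plus)
            then show "\<not> outcome TB X (q-l,False)"
            proof cases
              case a
              have "\<not> outcome TB Y (q-l,False)" using oc_antimono[OF oYq] by simp
              then show ?thesis using a ZA by simp
            next
              case b
              then show ?thesis using 3(3) IHA by simp
            qed
          qed
          then show ?thesis using 3 by blast
        qed
      qed
    qed
  qed
  have B: "Bprop' TB Z Y" unfolding Bprop'_def
  proof (intro allI impI)
    fix q q' assume qq: "q' \<le> q" and oYq: "\<not> outcome TB Y (q,True)"
    have pZ: "plus_g zero_g Y |\<in>| rights (plus_g Z Y)" using z0 by (auto simp: mem_rights_plus)
    show "\<not> outcome TB (plus_g Z Y) (q',False)"
    proof (rule noc_FI)
      fix l assume l': "l \<le> q'"
      then have l: "l \<le> q" using qq by simp
      have lefts_ok: "\<forall>X. X |\<in>| lefts (plus_g Z Y) \<longrightarrow> \<not> outcome TB X (q'-l,False)"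
        if hY: "\<forall>Y'. Y' |\<in>| lefts Y \<longrightarrow> \<not> outcome TB Y' (q-l,False)"
      proof (intro allI impI)
        fix X assume "X |\<in>| lefts (plus_g Z Y)"
        then consider (a) Z' where "Z' |\<in>| lefts Z" "X = plus_g Z' Y" | (b) Y' where "Y' |\<in>| lefts Y" "X = plus_g Z Y'"
          by (auto simp: mem_lefts_plus)
        then show "\<not> outcome TB X (q'-l,False)"
        proof cases
          case a
          then show ?thesis using ZB[OF a(1) _ oYq, of "q'-l"] qq by simp
        next
          case b
          have "\<not> outcome TB Y' (q'-l,False)" using hY b(1) oc_antimono qq by (metis diff_le_mono)
          then show ?thesis using b IHA by simp
        qed
      qed
      from oYq l show "\<exists>r\<le>TB-q'.
          (l<r \<and> (\<exists>X. X |\<in>| rights (plus_g Z Y) \<and> (\<not> outcome TB X (q'+r,False) \<or> \<not> outcome TB X (q'+r,True)))) \<or>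
          (r=l \<and> (\<exists>X. X |\<in>| rights (plus_g Z Y) \<and> \<not> outcome TB X (q'+r,True))) \<or>
          (r<l \<and> (\<forall>X. X |\<in>| lefts (plus_g Z Y) \<longrightarrow> \<not> outcome TB X (q'-l,False)))"
      proof (cases rule: noc_TE)
        case (1 r)
        have "r \<le> TB - q'" using 1(1) qq by simp
        moreover have "\<forall>Y'. Y' |\<in>| lefts Y \<longrightarrow> \<not> outcome TB Y' (q-l,False)" using 1(3) by blast
        ultimately show ?thesis using 1(2) lefts_ok by blast
      next
        case (2 r)
        show ?thesis
        proof (cases "l = 0")
          case True
          have "\<not> outcome TB Y (q',True)" using oc_antimono[OF oYq qq] .
          then have "\<not> outcome TB (plus_g zero_g Y) (q'+0,True)" by (simp add: plus_zero_left)
          then show ?thesis using pZ True by blast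
        next
          case False
          then show ?thesis using lefts_ok 2(3) by (intro exI[of _ 0]) auto
        qed
      next
        case (3 r Y')
        have "r \<le> TB - q'" using 3(1) qq by simp
        have "plus_g Z Y' |\<in>| rights (plus_g Z Y)" using 3 by (auto simp: mem_rights_plus)
        moreover have "\<not> outcome TB Y' (q'+r,True)" using 3(4) oc_antimono qq by (metis add_le_mono1)
        then have "\<not> outcome TB (plus_g Z Y') (q'+r,True)" using 3 IHA by simp
        ultimately show ?thesis using 3 \<open>r \<le> TB - q'\<close> by blast
      qed
    qed
  qed
  show ?case using A B unfolding Y_def by blast
qed

lemma oc_transfer:
  assumes "outcome TB A s"
  and hl: "\<And>X s'. X |\<in>| lefts A \<Longrightarrow> outcome TB X s' \<Longrightarrow> \<exists>X'. X' |\<in>| lefts B \<and> outcome TB X' s'"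
  and hr: "\<And>X' s'. X' |\<in>| rights B \<Longrightarrow> (\<forall>X. X |\<in>| rights A \<longrightarrow> outcome TB X s') \<Longrightarrow> outcome TB X' s'"
  shows "outcome TB B s"
proof -
  obtain q m where s: "s = (q,m)" by (cases s)
  consider (T) "m = True" | (F) "m = False" by blast
  then show ?thesis
  proof cases
    case T
    from assms(1) have "outcome TB A (q,True)" using s T by simp
    then obtain l where l: "l \<le> q"
        and h1: "\<And>r. r \<le> TB-q \<Longrightarrow> r<l \<Longrightarrow> \<exists>Y'. Y' |\<in>| lefts A \<and> (outcome TB Y' (q-l,True) \<or> outcome TB Y' (q-l,False))"
        and h2: "\<And>r. r \<le> TB-q \<Longrightarrow> r=l \<Longrightarrow> \<exists>Y'. Y' |\<in>| lefts A \<and> outcome TB Y' (q-l,False)"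
        and h3: "\<And>r Y'. r \<le> TB-q \<Longrightarrow> l<r \<Longrightarrow> Y' |\<in>| rights A \<Longrightarrow> outcome TB Y' (q+r,True)"
        by (elim oc_TE) blast
    show ?thesis unfolding s T
    proof (rule oc_TI[OF l])
      fix r assume "r \<le> TB - q" "r < l"
      then show "\<exists>X. X |\<in>| lefts B \<and> (outcome TB X (q-l,True) \<or> outcome TB X (q-l,False))"
        using h1 hl by metis
    next
      fix r assume "r \<le> TB - q" "r = l"
      then show "\<exists>X. X |\<in>| lefts B \<and> outcome TB X (q-l,False)"
        using h2 hl by metis
    next
      fix r X assume "r \<le> TB - q" "l < r" "X |\<in>| rights B"
      then show "outcome TB X (q+r,True)" using h3 hr by blast
    qed
  next
    case F
    from assms(1) have "outcome TB A (q,False)" using s F by simp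
    then obtain l where l: "l \<le> q"
        and h1: "\<And>r Y'. r \<le> TB-q \<Longrightarrow> l<r \<Longrightarrow> Y' |\<in>| rights A \<Longrightarrow> outcome TB Y' (q+r,False) \<and> outcome TB Y' (q+r,True)"
        and h2: "\<And>r Y'. r \<le> TB-q \<Longrightarrow> r=l \<Longrightarrow> Y' |\<in>| rights A \<Longrightarrow> outcome TB Y' (q+r,True)"
        and h3: "\<And>r. r \<le> TB-q \<Longrightarrow> r<l \<Longrightarrow> \<exists>Y'. Y' |\<in>| lefts A \<and> outcome TB Y' (q-l,False)"
        by (elim oc_FE) blast
    show ?thesis unfolding s F
    proof (rule oc_FI[OF l])
      fix r X assume "r \<le> TB - q" "l < r" "X |\<in>| rights B"
      then show "outcome TB X (q+r,False) \<and> outcome TB X (q+r,True)" using h1 hr by blast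
    next
      fix r X assume "r \<le> TB - q" "r = l" "X |\<in>| rights B"
      then show "outcome TB X (q+r,True)" using h2 hr by blast
    next
      fix r assume "r \<le> TB - q" "r < l"
      then show "\<exists>X. X |\<in>| lefts B \<and> outcome TB X (q-l,False)"
        using h3 hl by metis
    qed
  qed
qed

lemma sim:
  assumes cl: "\<And>Z1 Z2. S Z1 Z2 \<Longrightarrow> (\<forall>a. a |\<in>| lefts Z2 \<longrightarrow> (\<exists>b. b |\<in>| lefts Z1 \<and> S b a)) \<and> (\<forall>b. b |\<in>| rights Z1 \<longrightarrow> (\<exists>a. a |\<in>| rights Z2 \<and> S b a))"
  shows "S Z1 Z2 \<Longrightarrow> outcome TB (plus_g Z2 Y) s \<Longrightarrow> outcome TB (plus_g Z1 Y) s"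
proof (induction Z2 arbitrary: Z1 Y s)
  case (Game L2 R2)
  note oIH = Game.IH
  show ?case using Game.prems
  proof (induction Y arbitrary: Z1 s)
    case (Game LY RY)
    have c: "(\<forall>a. a |\<in>| L2 \<longrightarrow> (\<exists>b. b |\<in>| lefts Z1 \<and> S b a)) \<and> (\<forall>b. b |\<in>| rights Z1 \<longrightarrow> (\<exists>a. a |\<in>| R2 \<and> S b a))"
      using cl[OF Game.prems(1)] by simp
    show ?case
    proof (rule oc_transfer[OF Game.prems(2)])
      fix X s' assume X: "X |\<in>| lefts (plus_g (Game L2 R2) (Game LY RY))" and oX: "outcome TB X s'"
      from X consider (a) a where "a |\<in>| L2" "X = plus_g a (Game LY RY)" | (b) Y' where "Y' |\<in>| LY" "X = plus_g (Game L2 R2) Y'"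
        by (auto simp: mem_lefts_plus)
      then show "\<exists>X'. X' |\<in>| lefts (plus_g Z1 (Game LY RY)) \<and> outcome TB X' s'"
      proof cases
        case a
        then obtain b where b: "b |\<in>| lefts Z1" "S b a" using c by blast
        have "outcome TB (plus_g b (Game LY RY)) s'" using oIH(1)[OF a(1) b(2)] oX a by simp
        moreover have "plus_g b (Game LY RY) |\<in>| lefts (plus_g Z1 (Game LY RY))" using b by (auto simp: mem_lefts_plus)
        ultimately show ?thesis by blast
      next
        case b
        have "outcome TB (plus_g Z1 Y') s'" using Game.IH(1)[OF b(1) Game.prems(1)] oX b by simp
        moreover have "plus_g Z1 Y' |\<in>| lefts (plus_g Z1 (Game LY RY))" using b by (auto simp: mem_lefts_plus)
        ultimately show ?thesis by blast
      qed
    next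
      fix X' s' assume X': "X' |\<in>| rights (plus_g Z1 (Game LY RY))"
        and allR: "\<forall>X. X |\<in>| rights (plus_g (Game L2 R2) (Game LY RY)) \<longrightarrow> outcome TB X s'"
      from X' consider (a) b where "b |\<in>| rights Z1" "X' = plus_g b (Game LY RY)" | (b) Y' where "Y' |\<in>| RY" "X' = plus_g Z1 Y'"
        by (auto simp: mem_rights_plus)
      then show "outcome TB X' s'"
      proof cases
        case a
        then obtain a' where a': "a' |\<in>| R2" "S b a'" using c by blast
        have "plus_g a' (Game LY RY) |\<in>| rights (plus_g (Game L2 R2) (Game LY RY))" using a' by (auto simp: mem_rights_plus)
        then have "outcome TB (plus_g a' (Game LY RY)) s'" using allR by blast
        then show ?thesis using oIH(2)[OF a'(1) a'(2)] a by simp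
      next
        case b
        have "plus_g (Game L2 R2) Y' |\<in>| rights (plus_g (Game L2 R2) (Game LY RY))" using b by (auto simp: mem_rights_plus)
        then have "outcome TB (plus_g (Game L2 R2) Y') s'" using allR by blast
        then show ?thesis using Game.IH(2)[OF b(1) Game.prems(1)] b by simp
      qed
    qed
  qed
qed

lemma lefts_hp[simp]: "lefts (half_pow k) = {|zero_g|}"
  by (cases k) (simp_all add: one_g_def)
lemma rights_hp0[simp]: "rights (half_pow 0) = {||}"
  by (simp add: one_g_def)
lemma rights_hpS[simp]: "rights (half_pow (Suc k)) = {|half_pow k|}"
  by simp
lemma conj_zero'[simp]: "conj_g zero_g = zero_g" by (simp add: zero_g_def)
lemma lefts_chp0[simp]: "lefts (conj_g (half_pow 0)) = {||}"
  by (simp add: conj_lefts one_g_def)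
lemma lefts_chpS[simp]: "lefts (conj_g (half_pow (Suc k))) = {|conj_g (half_pow k)|}"
  by (simp add: conj_lefts)
lemma rights_chp[simp]: "rights (conj_g (half_pow k)) = {|zero_g|}"
  by (cases k) (simp_all add: conj_rights one_g_def)
lemma hp_ne_zero[simp]: "half_pow k \<noteq> zero_g" "conj_g (half_pow k) \<noteq> zero_g"
  by (cases k; simp add: zero_g_def one_g_def)+
lemma hp_inj[simp]: "half_pow j = half_pow k \<longleftrightarrow> j = k"
proof
  assume "half_pow j = half_pow k" then show "j = k"
  proof (induction j arbitrary: k)
    case 0 then show ?case by (cases k) (auto simp: one_g_def zero_g_def)
  next
    case (Suc j) then show ?case by (cases k) (auto simp: one_g_def zero_g_def)
  qed
qed simp
lemma conj_conj[simp]: "conj_g (conj_g G) = G"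
proof (induction G)
  case (Game L R)
  have "conj_g |`| conj_g |`| L = L" "conj_g |`| conj_g |`| R = R"
    by (simp_all add: fimage_fimage Game fset.map_ident_strong)
  then show ?case by simp
qed
lemma conj_inj[simp]: "conj_g a = conj_g b \<longleftrightarrow> a = b"
  by (metis conj_conj)

declare half_pow.simps[simp del]

lemma L1: "Aprop TB (half_pow k) Y \<and> Bprop TB (half_pow k) Y"
proof (induction k arbitrary: Y)
  case 0
  show ?case by (rule tokAB) simp_all
next
  case (Suc k)
  show ?case by (rule tokAB) (simp_all add: Suc)
qed

lemma L2: "Aprop' TB (conj_g (half_pow k)) Y \<and> Bprop' TB (conj_g (half_pow k)) Y"
proof (induction k arbitrary: Y)
  case 0
  show ?case by (rule tokAB') simp_all
next
  case (Suc k)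
  show ?case by (rule tokAB') (simp_all add: Suc)
qed

lemma L3: "outcome TB (plus_g (half_pow (Suc k)) Y) s \<Longrightarrow> outcome TB (plus_g (half_pow k) Y) s"
proof (rule sim[where S = "\<lambda>a b. (\<exists>j. a = half_pow j \<and> b = half_pow (Suc j)) \<or> (a = zero_g \<and> b = zero_g)"])
  fix Z1 Z2 assume "(\<exists>j. Z1 = half_pow j \<and> Z2 = half_pow (Suc j)) \<or> (Z1 = zero_g \<and> Z2 = zero_g)"
  then show "(\<forall>a. a |\<in>| lefts Z2 \<longrightarrow> (\<exists>b. b |\<in>| lefts Z1 \<and> ((\<exists>j. b = half_pow j \<and> a = half_pow (Suc j)) \<or> (b = zero_g \<and> a = zero_g)))) \<and>
    (\<forall>b. b |\<in>| rights Z1 \<longrightarrow> (\<exists>a. a |\<in>| rights Z2 \<and> ((\<exists>j. b = half_pow j \<and> a = half_pow (Suc j)) \<or> (b = zero_g \<and> a = zero_g))))"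
  proof (elim disjE exE conjE)
    fix j assume "Z1 = half_pow j" "Z2 = half_pow (Suc j)"
    then show ?thesis by (cases j) auto
  qed simp
qed auto

lemma L4: "outcome TB (plus_g (conj_g (half_pow k)) Y) s \<Longrightarrow> outcome TB (plus_g (conj_g (half_pow (Suc k))) Y) s"
proof (rule sim[where S = "\<lambda>a b. (\<exists>j. a = conj_g (half_pow (Suc j)) \<and> b = conj_g (half_pow j)) \<or> (a = zero_g \<and> b = zero_g)"])
  fix Z1 Z2 assume "(\<exists>j. Z1 = conj_g (half_pow (Suc j)) \<and> Z2 = conj_g (half_pow j)) \<or> (Z1 = zero_g \<and> Z2 = zero_g)"
  then show "(\<forall>a. a |\<in>| lefts Z2 \<longrightarrow> (\<exists>b. b |\<in>| lefts Z1 \<and> ((\<exists>j. b = conj_g (half_pow (Suc j)) \<and> a = conj_g (half_pow j)) \<or> (b = zero_g \<and> a = zero_g)))) \<and>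
    (\<forall>b. b |\<in>| rights Z1 \<longrightarrow> (\<exists>a. a |\<in>| rights Z2 \<and> ((\<exists>j. b = conj_g (half_pow (Suc j)) \<and> a = conj_g (half_pow j)) \<or> (b = zero_g \<and> a = zero_g))))"
  proof (elim disjE exE conjE)
    fix j assume "Z1 = conj_g (half_pow (Suc j))" "Z2 = conj_g (half_pow j)"
    then show ?thesis by (cases j) auto
  qed simp
qed auto

datatype tok = Zr | Pos nat | Neg nat

fun tokg :: "tok \<Rightarrow> game" where
  "tokg Zr = zero_g" | "tokg (Pos k) = half_pow k" | "tokg (Neg k) = conj_g (half_pow k)"

fun sumg :: "tok list \<Rightarrow> game" where
  "sumg [] = zero_g" | "sumg (t # ts) = plus_g (tokg t) (sumg ts)"

fun lmv :: "tok \<Rightarrow> tok set" where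
  "lmv Zr = {}" | "lmv (Pos k) = {Zr}" | "lmv (Neg 0) = {}" | "lmv (Neg (Suc k)) = {Neg k}"
fun rmv :: "tok \<Rightarrow> tok set" where
  "rmv Zr = {}" | "rmv (Neg k) = {Zr}" | "rmv (Pos 0) = {}" | "rmv (Pos (Suc k)) = {Pos k}"

lemma lefts_tokg: "X |\<in>| lefts (tokg t) \<longleftrightarrow> (\<exists>t'. t' \<in> lmv t \<and> X = tokg t')"
  by (cases t rule: lmv.cases) auto
lemma rights_tokg: "X |\<in>| rights (tokg t) \<longleftrightarrow> (\<exists>t'. t' \<in> rmv t \<and> X = tokg t')"
  by (cases t rule: rmv.cases) auto

inductive lml :: "tok list \<Rightarrow> tok list \<Rightarrow> bool" where
  lml_here: "t' \<in> lmv t \<Longrightarrow> lml (t # ts) (t' # ts)"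
| lml_there: "lml ts ts' \<Longrightarrow> lml (t # ts) (t # ts')"
inductive rml :: "tok list \<Rightarrow> tok list \<Rightarrow> bool" where
  rml_here: "t' \<in> rmv t \<Longrightarrow> rml (t # ts) (t' # ts)"
| rml_there: "rml ts ts' \<Longrightarrow> rml (t # ts) (t # ts')"

inductive_cases lml_NilE[elim!]: "lml [] ts'"
inductive_cases rml_NilE[elim!]: "rml [] ts'"
inductive_cases lml_ConsE: "lml (t # ts) ts'"
inductive_cases rml_ConsE: "rml (t # ts) ts'"

lemma lefts_sumg: "X |\<in>| lefts (sumg ts) \<longleftrightarrow> (\<exists>ts'. lml ts ts' \<and> X = sumg ts')"
proof (induction ts arbitrary: X)
  case Nil then show ?case by auto
next
  case (Cons t ts)
  show ?case
  proof
    assume "X |\<in>| lefts (sumg (t # ts))"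
    then show "\<exists>ts'. lml (t # ts) ts' \<and> X = sumg ts'"
      by (auto simp: mem_lefts_plus lefts_tokg Cons intro: lml.intros)
  next
    assume "\<exists>ts'. lml (t # ts) ts' \<and> X = sumg ts'"
    then obtain ts' where "lml (t # ts) ts'" "X = sumg ts'" by blast
    then show "X |\<in>| lefts (sumg (t # ts))"
      by (cases rule: lml_ConsE) (auto simp: mem_lefts_plus lefts_tokg Cons)
  qed
qed

lemma rights_sumg: "X |\<in>| rights (sumg ts) \<longleftrightarrow> (\<exists>ts'. rml ts ts' \<and> X = sumg ts')"
proof (induction ts arbitrary: X)
  case Nil then show ?case by auto
next
  case (Cons t ts)
  show ?case
  proof
    assume "X |\<in>| rights (sumg (t # ts))"
    then show "\<exists>ts'. rml (t # ts) ts' \<and> X = sumg ts'"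
      by (auto simp: mem_rights_plus rights_tokg Cons intro: rml.intros)
  next
    assume "\<exists>ts'. rml (t # ts) ts' \<and> X = sumg ts'"
    then obtain ts' where "rml (t # ts) ts'" "X = sumg ts'" by blast
    then show "X |\<in>| rights (sumg (t # ts))"
      by (cases rule: rml_ConsE) (auto simp: mem_rights_plus rights_tokg Cons)
  qed
qed

fun tsize :: "tok \<Rightarrow> nat" where
  "tsize Zr = 0" | "tsize (Pos k) = Suc k" | "tsize (Neg k) = Suc k"
definition tsz :: "tok list \<Rightarrow> nat" where "tsz ts = sum_list (map tsize ts)"

lemma lmv_tsize: "t' \<in> lmv t \<Longrightarrow> tsize t' < tsize t"
  by (cases t rule: lmv.cases) auto
lemma rmv_tsize: "t' \<in> rmv t \<Longrightarrow> tsize t' < tsize t"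
  by (cases t rule: rmv.cases) auto

lemma lml_tsz: "lml ts ts' \<Longrightarrow> tsz ts' < tsz ts"
  by (induction rule: lml.induct) (auto simp: tsz_def dest: lmv_tsize)
lemma rml_tsz: "rml ts ts' \<Longrightarrow> tsz ts' < tsz ts"
  by (induction rule: rml.induct) (auto simp: tsz_def dest: rmv_tsize)

fun kof :: "tok \<Rightarrow> nat" where
  "kof Zr = 0" | "kof (Pos k) = k" | "kof (Neg k) = k"
definition bnd :: "nat \<Rightarrow> tok list \<Rightarrow> bool" where "bnd N ts \<longleftrightarrow> (\<forall>t\<in>set ts. kof t \<le> N)"

lemma lmv_kof: "t' \<in> lmv t \<Longrightarrow> kof t' \<le> kof t"
  by (cases t rule: lmv.cases) auto
lemma rmv_kof: "t' \<in> rmv t \<Longrightarrow> kof t' \<le> kof t"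
  by (cases t rule: rmv.cases) auto

lemma lml_bnd: "lml ts ts' \<Longrightarrow> bnd N ts \<Longrightarrow> bnd N ts'"
  by (induction rule: lml.induct) (force simp: bnd_def dest: lmv_kof)+
lemma rml_bnd: "rml ts ts' \<Longrightarrow> bnd N ts \<Longrightarrow> bnd N ts'"
  by (induction rule: rml.induct) (force simp: bnd_def dest: rmv_kof)+

fun tv :: "nat \<Rightarrow> tok \<Rightarrow> int" where
  "tv N Zr = 0" | "tv N (Pos k) = 2^(N-k)" | "tv N (Neg k) = - (2^(N-k))"
definition iv :: "nat \<Rightarrow> tok list \<Rightarrow> int" where "iv N ts = sum_list (map (tv N) ts)"

lemma iv_simps[simp]: "iv N [] = 0" "iv N (t # ts) = tv N t + iv N ts"
  by (simp_all add: iv_def)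

lemma pow_Suc_split: "Suc k \<le> N \<Longrightarrow> (2::int)^(N-k) = 2 * 2^(N - Suc k)"
proof -
  assume "Suc k \<le> N"
  then have "N - k = Suc (N - Suc k)" by simp
  then show ?thesis by simp
qed

lemma lml_iv: "lml ts ts' \<Longrightarrow> bnd N ts \<Longrightarrow> iv N ts' < iv N ts"
proof (induction rule: lml.induct)
  case (lml_here t' t ts)
  then show ?case
  proof (cases t rule: lmv.cases)
    case (4 k)
    then have "Suc k \<le> N" using lml_here by (simp add: bnd_def)
    then show ?thesis using lml_here 4 pow_Suc_split[of k N] by simp
  qed auto
next
  case (lml_there ts ts' t)
  then show ?case by (simp add: bnd_def)
qed

lemma rml_iv: "rml ts ts' \<Longrightarrow> bnd N ts \<Longrightarrow> iv N ts < iv N ts'"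
proof (induction rule: rml.induct)
  case (rml_here t' t ts)
  then show ?case
  proof (cases t rule: rmv.cases)
    case (4 k)
    then have "Suc k \<le> N" using rml_here by (simp add: bnd_def)
    then show ?thesis using rml_here 4 pow_Suc_split[of k N] by simp
  qed auto
next
  case (rml_there ts ts' t)
  then show ?case by (simp add: bnd_def)
qed

lemma lml_upd: "i < length ts \<Longrightarrow> t' \<in> lmv (ts ! i) \<Longrightarrow> lml ts (ts[i := t'])"
proof (induction ts arbitrary: i)
  case Nil then show ?case by simp
next
  case (Cons t ts) then show ?case by (cases i) (auto intro: lml.intros)
qed
lemma rml_upd: "i < length ts \<Longrightarrow> t' \<in> rmv (ts ! i) \<Longrightarrow> rml ts (ts[i := t'])"
proof (induction ts arbitrary: i)
  case Nil then show ?case by simp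
next
  case (Cons t ts) then show ?case by (cases i) (auto intro: rml.intros)
qed
lemma iv_upd: "i < length ts \<Longrightarrow> iv N (ts[i := t']) = iv N ts - tv N (ts ! i) + tv N t'"
proof (induction ts arbitrary: i)
  case Nil then show ?case by simp
next
  case (Cons t ts) then show ?case by (cases i) auto
qed

lemma dvd_iv: "(\<And>t. t \<in> set ts \<Longrightarrow> d dvd tv N t) \<Longrightarrow> d dvd iv N ts"
  by (induction ts) auto

lemma iv_nonpos: "(\<And>t. t \<in> set ts \<Longrightarrow> tv N t \<le> 0) \<Longrightarrow> iv N ts \<le> 0"
  by (induction ts) (auto simp: add_nonpos_nonpos)
lemma iv_nonneg: "(\<And>t. t \<in> set ts \<Longrightarrow> tv N t \<ge> 0) \<Longrightarrow> iv N ts \<ge> 0"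
  by (induction ts) auto

lemma good_left:
  assumes pos: "0 < iv N ts" and b: "bnd N ts"
  shows "\<exists>ts'. lml ts ts' \<and> 0 \<le> iv N ts'"
proof -
  define S where "S = kof ` {t \<in> set ts. t \<noteq> Zr}"
  have fin: "finite S" unfolding S_def by simp
  have ne: "S \<noteq> {}"
  proof
    assume "S = {}"
    then have "\<And>t. t \<in> set ts \<Longrightarrow> t = Zr" unfolding S_def by auto
    then have "iv N ts \<le> 0" by (intro iv_nonpos) force
    with pos show False by simp
  qed
  define K where "K = Max S"
  have KS: "K \<in> S" unfolding K_def using fin ne by (rule Max_in)
  have Kle: "\<And>t. t \<in> set ts \<Longrightarrow> t \<noteq> Zr \<Longrightarrow> kof t \<le> K"
    unfolding K_def S_def using fin by (intro Max_ge) (auto simp: S_def)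
  have KN: "K \<le> N" using KS b unfolding S_def bnd_def by auto
  have dv: "(2::int)^(N-K) dvd iv N ts"
  proof (rule dvd_iv)
    fix t assume t: "t \<in> set ts"
    show "(2::int)^(N-K) dvd tv N t"
    proof (cases "t = Zr")
      case True then show ?thesis by simp
    next
      case False
      then have "kof t \<le> K" using Kle t by blast
      then have "N - K \<le> N - kof t" by simp
      then have "(2::int)^(N-K) dvd 2^(N - kof t)" by (rule le_imp_power_dvd)
      then show ?thesis by (cases t) auto
    qed
  qed
  have ge: "(2::int)^(N-K) \<le> iv N ts" using zdvd_imp_le[OF dv pos] .
  have ex: "\<exists>t\<in>set ts. t = Pos K \<or> (t = Neg K \<and> 0 < K)"
  proof (rule ccontr)
    assume nex: "\<not> ?thesis"
    from KS obtain t0 where t0: "t0 \<in> set ts" "t0 \<noteq> Zr" "kof t0 = K" unfolding S_def by auto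
    have K0: "K = 0"
    proof (rule ccontr)
      assume "K \<noteq> 0"
      then have Kp: "0 < K" by simp
      have "t0 = Pos K \<or> t0 = Neg K" using t0(2,3) by (cases t0) auto
      then show False using nex t0(1) Kp by blast
    qed
    have "tv N t \<le> 0" if tt: "t \<in> set ts" for t
    proof (cases t)
      case (Pos k)
      then have "k \<le> K" using Kle[OF tt] by simp
      then have "t = Pos K" using K0 Pos by simp
      with nex tt have False by blast
      then show ?thesis ..
    qed simp_all
    then have "\<And>t. t \<in> set ts \<Longrightarrow> tv N t \<le> 0" by blast
    then have "iv N ts \<le> 0" by (rule iv_nonpos)
    with pos show False by simp
  qed
  then obtain t where t: "t \<in> set ts" "t = Pos K \<or> (t = Neg K \<and> 0 < K)" by blast
  then obtain i where i: "i < length ts" "ts ! i = t" by (auto simp: in_set_conv_nth)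
  show ?thesis
  proof (cases "t = Pos K")
    case True
    have "lml ts (ts[i := Zr])" using i True by (intro lml_upd) auto
    moreover have "iv N (ts[i := Zr]) = iv N ts - 2^(N-K)" using iv_upd[OF i(1)] i True by simp
    ultimately show ?thesis using ge by (intro exI[of _ "ts[i := Zr]"]) simp
  next
    case False
    then have tN: "t = Neg K" "0 < K" using t by auto
    then obtain K' where K': "K = Suc K'" by (cases K) auto
    have "lml ts (ts[i := Neg K'])" using i tN K' by (intro lml_upd) auto
    moreover have "iv N (ts[i := Neg K']) = iv N ts + 2^(N-K) - 2^(N-K')"
      using iv_upd[OF i(1)] i tN K' by simp
    moreover have "(2::int)^(N-K') = 2 * 2^(N-K)" using pow_Suc_split[of K' N] K' KN by simp
    ultimately show ?thesis using ge by (intro exI[of _ "ts[i := Neg K']"]) simp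
  qed
qed

lemma good_right:
  assumes neg: "iv N ts < 0" and b: "bnd N ts"
  shows "\<exists>ts'. rml ts ts' \<and> iv N ts' \<le> 0"
proof -
  define S where "S = kof ` {t \<in> set ts. t \<noteq> Zr}"
  have fin: "finite S" unfolding S_def by simp
  have ne: "S \<noteq> {}"
  proof
    assume "S = {}"
    then have "\<And>t. t \<in> set ts \<Longrightarrow> t = Zr" unfolding S_def by auto
    then have "iv N ts \<ge> 0" by (intro iv_nonneg) force
    with neg show False by simp
  qed
  define K where "K = Max S"
  have KS: "K \<in> S" unfolding K_def using fin ne by (rule Max_in)
  have Kle: "\<And>t. t \<in> set ts \<Longrightarrow> t \<noteq> Zr \<Longrightarrow> kof t \<le> K"
    unfolding K_def S_def using fin by (intro Max_ge) (auto simp: S_def)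
  have KN: "K \<le> N" using KS b unfolding S_def bnd_def by auto
  have dv: "(2::int)^(N-K) dvd iv N ts"
  proof (rule dvd_iv)
    fix t assume t: "t \<in> set ts"
    show "(2::int)^(N-K) dvd tv N t"
    proof (cases "t = Zr")
      case True then show ?thesis by simp
    next
      case False
      then have "kof t \<le> K" using Kle t by blast
      then have "N - K \<le> N - kof t" by simp
      then have "(2::int)^(N-K) dvd 2^(N - kof t)" by (rule le_imp_power_dvd)
      then show ?thesis by (cases t) auto
    qed
  qed
  have dv': "(2::int)^(N-K) dvd - iv N ts" using dv by simp
  have ge: "(2::int)^(N-K) \<le> - iv N ts" using zdvd_imp_le[OF dv'] neg by simp
  have ex: "\<exists>t\<in>set ts. t = Neg K \<or> (t = Pos K \<and> 0 < K)"
  proof (rule ccontr)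
    assume nex: "\<not> ?thesis"
    from KS obtain t0 where t0: "t0 \<in> set ts" "t0 \<noteq> Zr" "kof t0 = K" unfolding S_def by auto
    have K0: "K = 0"
    proof (rule ccontr)
      assume "K \<noteq> 0"
      then have Kp: "0 < K" by simp
      have "t0 = Pos K \<or> t0 = Neg K" using t0(2,3) by (cases t0) auto
      then show False using nex t0(1) Kp by blast
    qed
    have "tv N t \<ge> 0" if tt: "t \<in> set ts" for t
    proof (cases t)
      case (Neg k)
      then have "k \<le> K" using Kle[OF tt] by simp
      then have "t = Neg K" using K0 Neg by simp
      with nex tt have False by blast
      then show ?thesis ..
    qed simp_all
    then have "\<And>t. t \<in> set ts \<Longrightarrow> tv N t \<ge> 0" by blast
    then have "iv N ts \<ge> 0" by (rule iv_nonneg)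
    with neg show False by simp
  qed
  then obtain t where t: "t \<in> set ts" "t = Neg K \<or> (t = Pos K \<and> 0 < K)" by blast
  then obtain i where i: "i < length ts" "ts ! i = t" by (auto simp: in_set_conv_nth)
  show ?thesis
  proof (cases "t = Neg K")
    case True
    have "rml ts (ts[i := Zr])" using i True by (intro rml_upd) auto
    moreover have "iv N (ts[i := Zr]) = iv N ts + 2^(N-K)" using iv_upd[OF i(1)] i True by simp
    ultimately show ?thesis using ge by (intro exI[of _ "ts[i := Zr]"]) simp
  next
    case False
    then have tN: "t = Pos K" "0 < K" using t by auto
    then obtain K' where K': "K = Suc K'" by (cases K) auto
    have "rml ts (ts[i := Pos K'])" using i tN K' by (intro rml_upd) auto
    moreover have "iv N (ts[i := Pos K']) = iv N ts - 2^(N-K) + 2^(N-K')"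
      using iv_upd[OF i(1)] i tN K' by simp
    moreover have "(2::int)^(N-K') = 2 * 2^(N-K)" using pow_Suc_split[of K' N] K' KN by simp
    ultimately show ?thesis using ge by (intro exI[of _ "ts[i := Pos K']"]) simp
  qed
qed

fun negt :: "tok \<Rightarrow> tok" where
  "negt Zr = Zr" | "negt (Pos k) = Neg k" | "negt (Neg k) = Pos k"

lemma conj_tokg: "conj_g (tokg t) = tokg (negt t)"
  by (cases t) auto

lemma conj_sumg: "conj_g (sumg ts) = sumg (map negt ts)"
  by (induction ts) (auto simp: conj_plus conj_tokg)

lemma sumg_append: "sumg (a @ b) = plus_g (sumg a) (sumg b)"
  by (induction a) (auto simp: plus_zero_left plus_assoc)

lemma iv_append: "iv N (a @ b) = iv N a + iv N b"
  by (induction a) auto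
lemma iv_negt: "iv N (map negt ts) = - iv N ts"
proof (induction ts)
  case (Cons t ts) then show ?case by (cases t) auto
qed simp

lemma bnd_append: "bnd N (a @ b) \<longleftrightarrow> bnd N a \<and> bnd N b"
  by (auto simp: bnd_def)
lemma kof_negt: "kof (negt t) = kof t" by (cases t) auto
lemma bnd_negt: "bnd N (map negt ts) \<longleftrightarrow> bnd N ts"
  by (auto simp: bnd_def kof_negt)

lemma V:
  assumes "bnd N ts"
  shows "outcome TB (sumg ts) (p,m) \<longleftrightarrow> (0 < iv N ts \<or> (iv N ts = 0 \<and> \<not> m))"
  using assms
proof (induction ts arbitrary: p m rule: measure_induct_rule[of tsz])
  case (less ts)
  have IH: "\<And>ts' p m. lml ts ts' \<or> rml ts ts' \<Longrightarrow> outcome TB (sumg ts') (p,m) \<longleftrightarrow> (0 < iv N ts' \<or> (iv N ts' = 0 \<and> \<not> m))"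
    using less lml_tsz rml_tsz lml_bnd rml_bnd by blast
  have Lneg: "\<not> outcome TB X s" if X: "X |\<in>| lefts (sumg ts)" and ivle: "iv N ts \<le> 0" for X s
  proof -
    obtain ts' where ts': "lml ts ts'" "X = sumg ts'" using X by (auto simp: lefts_sumg)
    have "iv N ts' < iv N ts" using lml_iv ts'(1) less.prems by blast
    then show ?thesis using IH[of ts' "fst s" "snd s"] ts' ivle by simp
  qed
  have Rpos: "outcome TB X s" if X: "X |\<in>| rights (sumg ts)" and ivge: "0 \<le> iv N ts" for X s
  proof -
    obtain ts' where ts': "rml ts ts'" "X = sumg ts'" using X by (auto simp: rights_sumg)
    have "iv N ts < iv N ts'" using rml_iv ts'(1) less.prems by blast
    then show ?thesis using IH[of ts' "fst s" "snd s"] ts' ivge by simp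
  qed
  consider (pos) "0 < iv N ts" | (neg) "iv N ts < 0" | (zT) "iv N ts = 0" "m" | (zF) "iv N ts = 0" "\<not> m"
    by linarith
  then show ?case
  proof cases
    case pos
    obtain ts' where ts': "lml ts ts'" "0 \<le> iv N ts'" using good_left[OF pos less.prems] by blast
    have gl: "\<exists>X. X |\<in>| lefts (sumg ts) \<and> outcome TB X (p, False)"
      using ts' IH[of ts' p False] by (auto simp: lefts_sumg)
    have "outcome TB (sumg ts) (p,m)"
    proof (cases m)
      case True
      have "outcome TB (sumg ts) (p,True)"
        by (rule oc_TI[of 0]) (use gl Rpos pos in auto)
      then show ?thesis using True by simp
    next
      case False
      have "outcome TB (sumg ts) (p,False)"
        by (rule oc_FI[of 0]) (use Rpos pos in auto)
      then show ?thesis using False by simp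
    qed
    then show ?thesis using pos by simp
  next
    case neg
    have "\<not> outcome TB (sumg ts) (p,m)"
    proof (cases m)
      case True
      have "\<not> outcome TB (sumg ts) (p,True)"
      proof (rule noc_TI)
        fix l assume "l \<le> p"
        show "\<exists>r\<le>TB - p.
          (r < l \<and> (\<forall>Y. Y |\<in>| lefts (sumg ts) \<longrightarrow> \<not> outcome TB Y (p - l, True) \<and> \<not> outcome TB Y (p - l, False))) \<or>
          (r = l \<and> (\<forall>Y. Y |\<in>| lefts (sumg ts) \<longrightarrow> \<not> outcome TB Y (p - l, False))) \<or>
          (l < r \<and> (\<exists>Y. Y |\<in>| rights (sumg ts) \<and> \<not> outcome TB Y (p + r, True)))"
          using Lneg neg by (intro exI[of _ 0]) (cases "l = 0"; auto)
      qed
      then show ?thesis using True by simp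
    next
      case False
      obtain ts' where ts': "rml ts ts'" "iv N ts' \<le> 0" using good_right[OF neg less.prems] by blast
      have gr: "\<exists>X. X |\<in>| rights (sumg ts) \<and> \<not> outcome TB X (p, True)"
        using ts' IH[of ts' p True] by (auto simp: rights_sumg)
      have "\<not> outcome TB (sumg ts) (p,False)"
      proof (rule noc_FI)
        fix l assume "l \<le> p"
        show "\<exists>r\<le>TB - p.
          (l < r \<and> (\<exists>Y. Y |\<in>| rights (sumg ts) \<and> (\<not> outcome TB Y (p + r, False) \<or> \<not> outcome TB Y (p + r, True)))) \<or>
          (r = l \<and> (\<exists>Y. Y |\<in>| rights (sumg ts) \<and> \<not> outcome TB Y (p + r, True))) \<or>
          (r < l \<and> (\<forall>Y. Y |\<in>| lefts (sumg ts) \<longrightarrow> \<not> outcome TB Y (p - l, False)))"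
          using Lneg neg gr by (intro exI[of _ 0]) (cases "l = 0"; auto)
      qed
      then show ?thesis using False by simp
    qed
    then show ?thesis using neg by simp
  next
    case zT
    have "\<not> outcome TB (sumg ts) (p,True)"
    proof (rule noc_TI)
      fix l assume "l \<le> p"
      show "\<exists>r\<le>TB - p.
        (r < l \<and> (\<forall>Y. Y |\<in>| lefts (sumg ts) \<longrightarrow> \<not> outcome TB Y (p - l, True) \<and> \<not> outcome TB Y (p - l, False))) \<or>
        (r = l \<and> (\<forall>Y. Y |\<in>| lefts (sumg ts) \<longrightarrow> \<not> outcome TB Y (p - l, False))) \<or>
        (l < r \<and> (\<exists>Y. Y |\<in>| rights (sumg ts) \<and> \<not> outcome TB Y (p + r, True)))"
        using Lneg zT by (intro exI[of _ 0]) (cases "l = 0"; auto)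
    qed
    then show ?thesis using zT by simp
  next
    case zF
    have "outcome TB (sumg ts) (p,False)"
      by (rule oc_FI[of 0]) (use Rpos zF in auto)
    then show ?thesis using zF by simp
  qed
qed

lemma tok_left: "t' \<in> lmv t \<Longrightarrow> outcome TB (plus_g (tokg t') Y) s \<Longrightarrow> outcome TB (plus_g (tokg t) Y) s"
proof (cases t rule: lmv.cases)
  case (2 k)
  assume "t' \<in> lmv t" "outcome TB (plus_g (tokg t') Y) s"
  then show ?thesis using 2 L1[of TB k Y] AD by (auto simp: plus_zero_left)
next
  case (4 k)
  assume "t' \<in> lmv t" "outcome TB (plus_g (tokg t') Y) s"
  then show ?thesis using 4 L4 by auto
qed auto

lemma tok_right: "t' \<in> rmv t \<Longrightarrow> outcome TB (plus_g (tokg t) Y) s \<Longrightarrow> outcome TB (plus_g (tokg t') Y) s"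
proof (cases t rule: rmv.cases)
  case (2 k)
  assume "t' \<in> rmv t" "outcome TB (plus_g (tokg t) Y) s"
  have A: "Aprop' TB (conj_g (half_pow k)) Y" using L2 by blast
  show ?thesis
  proof (rule ccontr)
    assume "\<not> outcome TB (plus_g (tokg t') Y) s"
    moreover have "t' = Zr" using \<open>t' \<in> rmv t\<close> 2 by simp
    ultimately have "\<not> outcome TB Y s" by (simp add: plus_zero_left)
    then have "\<not> outcome TB (plus_g (conj_g (half_pow k)) Y) s" using AD'[OF A] by blast
    then show False using 2 \<open>outcome TB (plus_g (tokg t) Y) s\<close> by simp
  qed
next
  case (4 k)
  assume "t' \<in> rmv t" "outcome TB (plus_g (tokg t) Y) s"
  then show ?thesis using 4 L3 by auto
qed auto

lemma GE_l: "lml ts ts' \<Longrightarrow> outcome TB (plus_g (sumg ts') W) s \<Longrightarrow> outcome TB (plus_g (sumg ts) W) s"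
proof (induction ts ts' arbitrary: W rule: lml.induct)
  case (lml_here t' t ts)
  then show ?case using tok_left[of t' t TB "plus_g (sumg ts) W" s] by (simp add: plus_assoc)
next
  case (lml_there ts ts' t)
  have e: "\<And>a. plus_g (plus_g (tokg t) a) W = plus_g a (plus_g (tokg t) W)"
    by (metis plus_assoc plus_comm)
  show ?case using lml_there.IH[of "plus_g (tokg t) W"] lml_there.prems by (simp add: e)
qed

lemma GE_r: "rml ts ts' \<Longrightarrow> outcome TB (plus_g (sumg ts) W) s \<Longrightarrow> outcome TB (plus_g (sumg ts') W) s"
proof (induction ts ts' arbitrary: W rule: rml.induct)
  case (rml_here t' t ts)
  then show ?case using tok_right[of t' t TB "plus_g (sumg ts) W" s] by (simp add: plus_assoc)
next
  case (rml_there ts ts' t)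
  have e: "\<And>a. plus_g (plus_g (tokg t) a) W = plus_g a (plus_g (tokg t) W)"
    by (metis plus_assoc plus_comm)
  show ?case using rml_there.IH[of "plus_g (tokg t) W"] rml_there.prems by (simp add: e)
qed

lemma bnd_tsz: "bnd (tsz ts) ts"
proof -
  have "\<And>t. t \<in> set ts \<Longrightarrow> kof t \<le> tsz ts"
  proof -
    fix t assume "t \<in> set ts"
    then have "tsize t \<le> tsz ts" unfolding tsz_def by (induction ts) auto
    moreover have "kof t \<le> tsize t" by (cases t) auto
    ultimately show "kof t \<le> tsz ts" by simp
  qed
  then show ?thesis by (simp add: bnd_def)
qed

lemma strict:
  assumes b: "bnd N a" "bnd N b" and lt: "iv N b < iv N a"
  shows "\<not> game_ge TB (sumg b) (sumg a)"
proof -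
  let ?X = "sumg (map negt b)"
  have "outcome TB (plus_g (sumg a) ?X) (0,True)"
    using V[of N "a @ map negt b" TB 0 True] b lt
    by (simp add: sumg_append bnd_append bnd_negt iv_append iv_negt)
  moreover have "\<not> outcome TB (plus_g (sumg b) ?X) (0,True)"
    using V[of N "b @ map negt b" TB 0 True] b
    by (simp add: sumg_append bnd_append bnd_negt iv_append iv_negt)
  ultimately show ?thesis unfolding game_ge_def by blast
qed

lemma num: "is_number TB (sumg ts)"
proof (induction ts rule: measure_induct_rule[of tsz])
  case (less ts)
  define N where "N = tsz ts"
  have bN: "bnd N ts" unfolding N_def by (rule bnd_tsz)
  show ?case
  proof (rule is_number.intros[where H = "sumg ts"])
    show "game_eq TB (sumg ts) (sumg ts)" by (simp add: game_eq_def game_ge_def)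
    show "\<forall>X. X |\<in>| lefts (sumg ts) \<longrightarrow> is_number TB X"
      using less lml_tsz by (auto simp: lefts_sumg)
    show "\<forall>X. X |\<in>| rights (sumg ts) \<longrightarrow> is_number TB X"
      using less rml_tsz by (auto simp: rights_sumg)
    show "\<forall>X. X |\<in>| lefts (sumg ts) \<longrightarrow> game_gt TB (sumg ts) X"
    proof (intro allI impI)
      fix X assume "X |\<in>| lefts (sumg ts)"
      then obtain ts' where ts': "lml ts ts'" "X = sumg ts'" by (auto simp: lefts_sumg)
      have "game_ge TB (sumg ts) (sumg ts')"
        unfolding game_ge_def using GE_l[OF ts'(1)] by blast
      moreover have "\<not> game_ge TB (sumg ts') (sumg ts)"
        using strict[of N ts ts' TB] bN lml_bnd[OF ts'(1) bN] lml_iv[OF ts'(1) bN] by blast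
      ultimately show "game_gt TB (sumg ts) X" using ts' by (simp add: game_gt_def)
    qed
    show "\<forall>X. X |\<in>| rights (sumg ts) \<longrightarrow> game_gt TB X (sumg ts)"
    proof (intro allI impI)
      fix X assume "X |\<in>| rights (sumg ts)"
      then obtain ts' where ts': "rml ts ts'" "X = sumg ts'" by (auto simp: rights_sumg)
      have "game_ge TB (sumg ts') (sumg ts)"
        unfolding game_ge_def using GE_r[OF ts'(1)] by blast
      moreover have "\<not> game_ge TB (sumg ts) (sumg ts')"
        using strict[of N ts' ts TB] bN rml_bnd[OF ts'(1) bN] rml_iv[OF ts'(1) bN] by blast
      ultimately show "game_gt TB X (sumg ts)" using ts' by (simp add: game_gt_def)
    qed
  qed
qed

lemma copies_sumg: "copies m (half_pow k) = sumg (replicate m (Pos k))"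
  by (induction m) auto

theorem mainTheorem19:
  fixes TB :: nat and n :: int and k :: nat
  assumes "1 \<le> k"
  shows "is_number TB (dyadic n k)"
proof (cases "0 \<le> n")
  case True
  then show ?thesis by (simp add: dyadic_def copies_sumg num)
next
  case False
  then show ?thesis by (simp add: dyadic_def copies_sumg conj_sumg num)
qed

end
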